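(* Let $A=A_n^\ell$, $e=\gcd(n,\ell)$, and let $M$ be an indecomposable non-projective $A$-module with length $\ell(M)$. Then the $\nu$-orbit $O_\nu(M)$ of $M$ is an orthogonal system in $A$-$\underline{\mathrm{mod}}$ if and only if $\ell(M)\le e$ or $\ell+1-e\le\ell(M)\le\ell$.
   Context: $A_n^\ell=kQ/I$ ($k$ algebraically closed), $Q$ the cyclic quiver with vertices $1,\dots,n$ and arrows $i\to i+1$ ($i<n$), $n\to 1$, $I$ generated by all paths of length $\ell+1$. $\ell(M)$ denotes the number of composition factors of $M$; indecomposable modules are uniserial and are projective iff of length $\ell+1$. $\nu$ is the Nakayama functor, $O_\nu(M)$ the set of (isomorphism classes of) modules $\nu^j(M)$, $j\in\mathbb{Z}$. $\underline{\mathrm{Hom}}_A(M,N)$ is $\mathrm{Hom}_A(M,N)$ modulo morphisms factoring through projective modules. A stable brick is an indecomposable $M$ with $\underline{\mathrm{Hom}}_A(M,M)\cong k$; an orthogonal system is a set of stable bricks with $\underline{\mathrm{Hom}}_A(M,N)=0$ for all distinct $M,N$ in it. *)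

theory Defs
  imports "Jordan_Normal_Form.Matrix" "HOL-Computational_Algebra.Polynomial"
begin

text \<open>Finite-dimensional representations of the cyclic quiver with vertices
  0,...,n-1 (vertex i stands for vertex i+1 of the paper) and arrows i -> (i+1) mod n,
  bound by all paths of length l+1.  Such representations are exactly the
  finite-dimensional (left) modules over A_n^l.\<close>

record 'k qrep =
  dims :: "nat \<Rightarrow> nat"
  maps :: "nat \<Rightarrow> 'k mat"

definition nxt :: "nat \<Rightarrow> nat \<Rightarrow> nat" where
  "nxt n i = (i + 1) mod n"

fun pathmap :: "nat \<Rightarrow> 'k::field qrep \<Rightarrow> nat \<Rightarrow> nat \<Rightarrow> 'k mat" where
  "pathmap n M i 0 = 1\<^sub>m (dims M i)"
| "pathmap n M i (Suc m) = maps M ((i + m) mod n) * pathmap n M i m"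

definition is_rep :: "nat \<Rightarrow> nat \<Rightarrow> 'k::field qrep \<Rightarrow> bool" where
  "is_rep n l M \<longleftrightarrow>
     (\<forall>i<n. maps M i \<in> carrier_mat (dims M (nxt n i)) (dims M i)) \<and>
     (\<forall>i<n. pathmap n M i (Suc l) = 0\<^sub>m (dims M ((i + Suc l) mod n)) (dims M i))"

definition is_hom :: "nat \<Rightarrow> (nat \<Rightarrow> 'k::field mat) \<Rightarrow> 'k qrep \<Rightarrow> 'k qrep \<Rightarrow> bool" where
  "is_hom n f M N \<longleftrightarrow>
     (\<forall>i<n. f i \<in> carrier_mat (dims N i) (dims M i)) \<and>
     (\<forall>i<n. f (nxt n i) * maps M i = maps N i * f i)"

definition is_epi :: "nat \<Rightarrow> (nat \<Rightarrow> 'k::field mat) \<Rightarrow> 'k qrep \<Rightarrow> 'k qrep \<Rightarrow> bool" where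
  "is_epi n f M N \<longleftrightarrow> is_hom n f M N \<and>
     (\<forall>i<n. \<forall>y \<in> carrier_vec (dims N i). \<exists>x \<in> carrier_vec (dims M i). f i *\<^sub>v x = y)"

definition iso :: "nat \<Rightarrow> 'k::field qrep \<Rightarrow> 'k qrep \<Rightarrow> bool" where
  "iso n M N \<longleftrightarrow> (\<exists>f g. is_hom n f M N \<and> is_hom n g N M \<and>
     (\<forall>i<n. g i * f i = 1\<^sub>m (dims M i) \<and> f i * g i = 1\<^sub>m (dims N i)))"

definition projective :: "nat \<Rightarrow> nat \<Rightarrow> 'k::field qrep \<Rightarrow> bool" where
  "projective n l P \<longleftrightarrow> is_rep n l P \<and>
     (\<forall>X Y g f. is_rep n l X \<longrightarrow> is_rep n l Y \<longrightarrow> is_epi n g X Y \<longrightarrow> is_hom n f P Y \<longrightarrow>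
        (\<exists>h. is_hom n h P X \<and> (\<forall>i<n. g i * h i = f i)))"

definition is_zero_rep :: "nat \<Rightarrow> 'k qrep \<Rightarrow> bool" where
  "is_zero_rep n M \<longleftrightarrow> (\<forall>i<n. dims M i = 0)"

definition indecomposable :: "nat \<Rightarrow> nat \<Rightarrow> 'k::field qrep \<Rightarrow> bool" where
  "indecomposable n l M \<longleftrightarrow> is_rep n l M \<and> \<not> is_zero_rep n M \<and>
     (\<forall>e. is_hom n e M M \<longrightarrow> (\<forall>i<n. e i * e i = e i) \<longrightarrow>
        (\<forall>i<n. e i = 0\<^sub>m (dims M i) (dims M i)) \<or> (\<forall>i<n. e i = 1\<^sub>m (dims M i)))"

text \<open>length = number of composition factors = total dimension\<close>
definition len :: "nat \<Rightarrow> 'k qrep \<Rightarrow> nat" where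
  "len n M = (\<Sum>i<n. dims M i)"

definition factors_proj :: "nat \<Rightarrow> nat \<Rightarrow> (nat \<Rightarrow> 'k::field mat) \<Rightarrow> 'k qrep \<Rightarrow> 'k qrep \<Rightarrow> bool" where
  "factors_proj n l f M N \<longleftrightarrow>
     (\<exists>P g h. projective n l P \<and> is_hom n g M P \<and> is_hom n h P N \<and> (\<forall>i<n. f i = h i * g i))"

definition stable_hom_zero :: "nat \<Rightarrow> nat \<Rightarrow> 'k::field qrep \<Rightarrow> 'k qrep \<Rightarrow> bool" where
  "stable_hom_zero n l M N \<longleftrightarrow> (\<forall>f. is_hom n f M N \<longrightarrow> factors_proj n l f M N)"

text \<open>stable End(M) is one-dimensional, i.e. isomorphic to k\<close>
definition stable_brick :: "nat \<Rightarrow> nat \<Rightarrow> 'k::field qrep \<Rightarrow> bool" where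
  "stable_brick n l M \<longleftrightarrow> indecomposable n l M \<and>
     (\<exists>f. is_hom n f M M \<and> \<not> factors_proj n l f M M \<and>
        (\<forall>g. is_hom n g M M \<longrightarrow>
           (\<exists>c. factors_proj n l (\<lambda>i. g i - c \<cdot>\<^sub>m f i) M M)))"

text \<open>orthogonal system: a set of stable bricks (given by representatives;
  distinct isoclasses = non-isomorphic representatives)\<close>
definition orthogonal_system :: "nat \<Rightarrow> nat \<Rightarrow> 'k::field qrep set \<Rightarrow> bool" where
  "orthogonal_system n l S \<longleftrightarrow>
     (\<forall>X\<in>S. stable_brick n l X) \<and>
     (\<forall>X\<in>S. \<forall>Y\<in>S. \<not> iso n X Y \<longrightarrow> stable_hom_zero n l X Y)"

text \<open>Nakayama functor of A_n^l: nu(P_i) = I_i = P_(i-l); on modules it is (up to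
  isomorphism) the twist relabelling vertices, nu(M)_j = M_(j+l).
  nu_pow n l j M is nu^j(M) for an integer j.\<close>
definition shift_rep :: "nat \<Rightarrow> nat \<Rightarrow> 'k qrep \<Rightarrow> 'k qrep" where
  "shift_rep n s M = \<lparr> dims = (\<lambda>i. dims M ((i + s) mod n)), maps = (\<lambda>i. maps M ((i + s) mod n)) \<rparr>"

definition nu_pow :: "nat \<Rightarrow> nat \<Rightarrow> int \<Rightarrow> 'k qrep \<Rightarrow> 'k qrep" where
  "nu_pow n l j M = shift_rep n (nat ((j * int l) mod int n)) M"

definition nu_orbit :: "nat \<Rightarrow> nat \<Rightarrow> 'k::field qrep \<Rightarrow> 'k qrep set" where
  "nu_orbit n l M = {N. is_rep n l N \<and> (\<exists>j::int. iso n N (nu_pow n l j M))}"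

definition alg_closed_field :: "'k::field itself \<Rightarrow> bool" where
  "alg_closed_field _ \<longleftrightarrow> (\<forall>p :: 'k poly. degree p \<ge> 1 \<longrightarrow> (\<exists>x. poly p x = 0))"

end

theory Submission
  imports Defs "Jordan_Normal_Form.Determinant"
begin
lemma assoc_dim[simp]: "dim_col A = dim_row B \<Longrightarrow> dim_col B = dim_row C \<Longrightarrow> (A :: 'a :: semiring_0 mat) * B * C = A * (B * C)"
  by (rule assoc_mult_mat[of A "dim_row A" "dim_col A" B "dim_col B" C "dim_col C"]) auto

lemma assoc_dim_vec[simp]: "dim_col A = dim_row B \<Longrightarrow> dim_col B = dim_vec v \<Longrightarrow> ((A :: 'a :: semiring_0 mat) * B) *\<^sub>v v = A *\<^sub>v (B *\<^sub>v v)"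
  by (rule assoc_mult_mat_vec[of A "dim_row A" "dim_col A" B "dim_col B" v]) auto

lemma mat_vec_unit:
  assumes "(A :: 'a :: field mat) \<in> carrier_mat r c" "b < c"
  shows "A *\<^sub>v unit_vec c b = col A b"
  using assms by (intro eq_vecI) (auto simp: scalar_prod_right_unit)

lemma mat_eq_cols:
  assumes "(A :: 'a :: field mat) \<in> carrier_mat r c" "B \<in> carrier_mat r c"
    and "\<And>b. b < c \<Longrightarrow> A *\<^sub>v unit_vec c b = B *\<^sub>v unit_vec c b"
  shows "A = B"
  using assms by (intro mat_col_eqI) (auto simp: mat_vec_unit[symmetric])

lemma mat_zero_cols:
  assumes "(A :: 'a :: field mat) \<in> carrier_mat r c"
    and "\<And>b. b < c \<Longrightarrow> A *\<^sub>v unit_vec c b = 0\<^sub>v r"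
  shows "A = 0\<^sub>m r c"
  using assms by (intro mat_eq_cols[of A r c]) auto

lemma nxt_lt: "0 < n \<Longrightarrow> nxt n i < n" by (simp add: nxt_def)

lemma is_repD1: "is_rep n l M \<Longrightarrow> i < n \<Longrightarrow> maps M i \<in> carrier_mat (dims M ((i+1) mod n)) (dims M i)"
  by (simp add: is_rep_def nxt_def)

lemma pathmap_carrier:
  assumes "is_rep n l M" "i < n"
  shows "pathmap n M i s \<in> carrier_mat (dims M ((i+s) mod n)) (dims M i)"
proof (induction s)
  case 0
  then show ?case using assms by simp
next
  case (Suc s)
  have n: "0 < n" using assms by simp
  have "maps M ((i+s) mod n) \<in> carrier_mat (dims M (((i+s) mod n + 1) mod n)) (dims M ((i+s) mod n))"
    using is_repD1[OF assms(1)] n by simp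
  moreover have "((i+s) mod n + 1) mod n = (i + Suc s) mod n" by (simp add: mod_simps)
  ultimately show ?case using Suc by auto
qed

lemma pathmap_prepend:
  assumes "is_rep n l M" "i < n"
  shows "pathmap n M ((i+1) mod n) s * maps M i = pathmap n M i (Suc s)"
proof (induction s)
  case 0
  then show ?case using is_repD1[OF assms] assms(2) by simp
next
  case (Suc s)
  have n: "0 < n" using assms by simp
  have c1: "maps M i \<in> carrier_mat (dims M ((i+1) mod n)) (dims M i)" using is_repD1[OF assms] .
  have c2: "pathmap n M ((i+1) mod n) s \<in> carrier_mat (dims M (((i+1) mod n + s) mod n)) (dims M ((i+1) mod n))"
    using pathmap_carrier[OF assms(1)] n by simp
  have c3: "maps M (((i+1) mod n + s) mod n) \<in> carrier_mat (dims M ((((i+1) mod n + s) mod n + 1) mod n)) (dims M (((i+1) mod n + s) mod n))"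
    using is_repD1[OF assms(1)] n by simp
  have e: "((i+1) mod n + s) mod n = (i + Suc s) mod n" by (simp add: mod_simps)
  have "pathmap n M ((i+1) mod n) (Suc s) * maps M i
      = maps M (((i+1) mod n + s) mod n) * (pathmap n M ((i+1) mod n) s * maps M i)"
    using c1 c2 c3 by simp
  also have "\<dots> = pathmap n M i (Suc (Suc s))" using Suc e by simp
  finally show ?case .
qed

lemma pathmap_add:
  assumes "is_rep n l M" "i < n"
  shows "pathmap n M ((i+s1) mod n) s2 * pathmap n M i s1 = pathmap n M i (s1+s2)"
proof (induction s2)
  case 0
  then show ?case using pathmap_carrier[OF assms, of s1] by simp
next
  case (Suc s2)
  have n: "0 < n" using assms by simp
  let ?j = "(i+s1) mod n"
  have j: "?j < n" using n by simp
  have c1: "pathmap n M i s1 \<in> carrier_mat (dims M ?j) (dims M i)" using pathmap_carrier[OF assms] .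
  have c2: "pathmap n M ?j s2 \<in> carrier_mat (dims M ((?j + s2) mod n)) (dims M ?j)"
    using pathmap_carrier[OF assms(1) j] .
  have c3: "maps M ((?j + s2) mod n) \<in> carrier_mat (dims M (((?j + s2) mod n + 1) mod n)) (dims M ((?j + s2) mod n))"
    using is_repD1[OF assms(1)] n by simp
  have e: "(?j + s2) mod n = (i + (s1 + s2)) mod n" by (simp add: mod_simps add.assoc)
  have "pathmap n M ?j (Suc s2) * pathmap n M i s1 = maps M ((?j + s2) mod n) * (pathmap n M ?j s2 * pathmap n M i s1)"
    using c1 c2 c3 by simp
  also have "\<dots> = pathmap n M i (s1 + Suc s2)" using Suc e by simp
  finally show ?case .
qed

lemma is_homD1: "is_hom n f M N \<Longrightarrow> i < n \<Longrightarrow> f i \<in> carrier_mat (dims N i) (dims M i)"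
  by (simp add: is_hom_def)

lemma is_homD2: "is_hom n f M N \<Longrightarrow> i < n \<Longrightarrow> f ((i+1) mod n) * maps M i = maps N i * f i"
  by (simp add: is_hom_def nxt_def)

lemma hom_pathmap:
  assumes "is_rep n l M" "is_rep n l' N" "is_hom n f M N" "i < n"
  shows "f ((i+s) mod n) * pathmap n M i s = pathmap n N i s * f i"
proof (induction s)
  case 0
  then show ?case using is_homD1[OF assms(3,4)] assms(4) by simp
next
  case (Suc s)
  have n: "0 < n" using assms by simp
  let ?j = "(i+s) mod n"
  have j: "?j < n" using n by simp
  have e: "(?j + 1) mod n = (i + Suc s) mod n" by (simp add: mod_simps)
  have cM: "pathmap n M i s \<in> carrier_mat (dims M ?j) (dims M i)" using pathmap_carrier[OF assms(1,4)] .
  have cN: "pathmap n N i s \<in> carrier_mat (dims N ?j) (dims N i)" using pathmap_carrier[OF assms(2,4)] .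
  have m1: "maps M ?j \<in> carrier_mat (dims M ((?j+1) mod n)) (dims M ?j)" using is_repD1[OF assms(1) j] .
  have m2: "maps N ?j \<in> carrier_mat (dims N ((?j+1) mod n)) (dims N ?j)" using is_repD1[OF assms(2) j] .
  have f1: "f ((?j+1) mod n) \<in> carrier_mat (dims N ((?j+1) mod n)) (dims M ((?j+1) mod n))"
    using is_homD1[OF assms(3)] n by simp
  have f2: "f ?j \<in> carrier_mat (dims N ?j) (dims M ?j)" using is_homD1[OF assms(3) j] .
  have f3: "f i \<in> carrier_mat (dims N i) (dims M i)" using is_homD1[OF assms(3,4)] .
  have "f ((i + Suc s) mod n) * pathmap n M i (Suc s) = f ((?j+1) mod n) * (maps M ?j * pathmap n M i s)"
    using e by simp
  also have "\<dots> = (f ((?j+1) mod n) * maps M ?j) * pathmap n M i s" using f1 m1 cM by simp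
  also have "\<dots> = (maps N ?j * f ?j) * pathmap n M i s" using is_homD2[OF assms(3) j] by simp
  also have "\<dots> = maps N ?j * (f ?j * pathmap n M i s)" using m2 f2 cM by simp
  also have "\<dots> = maps N ?j * (pathmap n N i s * f i)" using Suc by simp
  also have "\<dots> = pathmap n N i (Suc s) * f i" using m2 cN f3 by simp
  finally show ?case .
qed

lemma hom_pathmap_vec:
  assumes "is_rep n l M" "is_rep n l' N" "is_hom n f M N" "i < n" "v \<in> carrier_vec (dims M i)"
  shows "f ((i+s) mod n) *\<^sub>v (pathmap n M i s *\<^sub>v v) = pathmap n N i s *\<^sub>v (f i *\<^sub>v v)"
proof -
  have n: "0 < n" using assms by simp
  have cM: "pathmap n M i s \<in> carrier_mat (dims M ((i+s) mod n)) (dims M i)" using pathmap_carrier[OF assms(1,4)] .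
  have cN: "pathmap n N i s \<in> carrier_mat (dims N ((i+s) mod n)) (dims N i)" using pathmap_carrier[OF assms(2,4)] .
  have f1: "f ((i+s) mod n) \<in> carrier_mat (dims N ((i+s) mod n)) (dims M ((i+s) mod n))"
    using is_homD1[OF assms(3)] n by simp
  have f3: "f i \<in> carrier_mat (dims N i) (dims M i)" using is_homD1[OF assms(3,4)] .
  have "f ((i+s) mod n) *\<^sub>v (pathmap n M i s *\<^sub>v v) = (f ((i+s) mod n) * pathmap n M i s) *\<^sub>v v"
    using cM f1 assms(5) by simp
  also have "\<dots> = (pathmap n N i s * f i) *\<^sub>v v" using hom_pathmap[OF assms(1-4)] by simp
  also have "\<dots> = pathmap n N i s *\<^sub>v (f i *\<^sub>v v)" using cN f3 assms(5) by simp
  finally show ?thesis .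
qed

lemma is_hom_comp:
  assumes "is_rep n l M" "is_rep n l1 N" "is_rep n l2 K" "is_hom n f M N" "is_hom n g N K"
  shows "is_hom n (\<lambda>i. g i * f i) M K"
  unfolding is_hom_def
proof (intro conjI allI impI)
  fix i assume i: "i < n"
  show "g i * f i \<in> carrier_mat (dims K i) (dims M i)"
    using is_homD1[OF assms(4) i] is_homD1[OF assms(5) i] by auto
  have n: "0 < n" using i by simp
  have j: "nxt n i < n" using nxt_lt[OF n] .
  have c1: "f i \<in> carrier_mat (dims N i) (dims M i)" using is_homD1[OF assms(4) i] .
  have c2: "g i \<in> carrier_mat (dims K i) (dims N i)" using is_homD1[OF assms(5) i] .
  have c3: "f (nxt n i) \<in> carrier_mat (dims N (nxt n i)) (dims M (nxt n i))" using is_homD1[OF assms(4) j] .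
  have c4: "g (nxt n i) \<in> carrier_mat (dims K (nxt n i)) (dims N (nxt n i))" using is_homD1[OF assms(5) j] .
  have h1: "f (nxt n i) * maps M i = maps N i * f i" using assms(4) i by (simp add: is_hom_def)
  have h2: "g (nxt n i) * maps N i = maps K i * g i" using assms(5) i by (simp add: is_hom_def)
  have mM: "maps M i \<in> carrier_mat (dims M (nxt n i)) (dims M i)" using assms(1) i by (simp add: is_rep_def)
  have mN: "maps N i \<in> carrier_mat (dims N (nxt n i)) (dims N i)" using assms(2) i by (simp add: is_rep_def)
  have mK: "maps K i \<in> carrier_mat (dims K (nxt n i)) (dims K i)" using assms(3) i by (simp add: is_rep_def)
  have "g (nxt n i) * f (nxt n i) * maps M i = g (nxt n i) * (f (nxt n i) * maps M i)"
    using c3 c4 mM by simp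
  also have "\<dots> = g (nxt n i) * (maps N i * f i)" using h1 by simp
  also have "\<dots> = (g (nxt n i) * maps N i) * f i" using c4 c1 mN by simp
  also have "\<dots> = (maps K i * g i) * f i" using h2 by simp
  also have "\<dots> = maps K i * (g i * f i)" using mK c2 c1 by simp
  finally show "g (nxt n i) * f (nxt n i) * maps M i = maps K i * (g i * f i)" .
qed

lemma is_hom_id:
  assumes "is_rep n l M"
  shows "is_hom n (\<lambda>i. 1\<^sub>m (dims M i)) M M"
  using assms unfolding is_hom_def is_rep_def by auto

lemma is_hom_cong:
  assumes "is_hom n f M N" "\<And>i. i < n \<Longrightarrow> f i = f2 i"
  shows "is_hom n f2 M N"
  using assms nxt_lt unfolding is_hom_def by (metis gr_zeroI not_less_zero)

lemma iso_refl: "is_rep n l M \<Longrightarrow> iso n M M"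
  unfolding iso_def using is_hom_id by fastforce

lemma iso_sym: "iso n M N \<Longrightarrow> iso n N M"
  unfolding iso_def by blast

lemma iso_trans:
  assumes "is_rep n l A" "is_rep n l1 B" "is_rep n l2 C" "iso n A B" "iso n B C"
  shows "iso n A C"
proof -
  obtain f g where fg: "is_hom n f A B" "is_hom n g B A"
    "\<forall>i<n. g i * f i = 1\<^sub>m (dims A i) \<and> f i * g i = 1\<^sub>m (dims B i)"
    using assms(4) unfolding iso_def by blast
  obtain f' g' where fg': "is_hom n f' B C" "is_hom n g' C B"
    "\<forall>i<n. g' i * f' i = 1\<^sub>m (dims B i) \<and> f' i * g' i = 1\<^sub>m (dims C i)"
    using assms(5) unfolding iso_def by blast
  have h1: "is_hom n (\<lambda>i. f' i * f i) A C" using is_hom_comp[OF assms(1,2,3) fg(1) fg'(1)] .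
  have h2: "is_hom n (\<lambda>i. g i * g' i) C A" using is_hom_comp[OF assms(3,2,1) fg'(2) fg(2)] .
  have "\<forall>i<n. (g i * g' i) * (f' i * f i) = 1\<^sub>m (dims A i) \<and> (f' i * f i) * (g i * g' i) = 1\<^sub>m (dims C i)"
  proof (intro allI impI)
    fix i assume i: "i < n"
    note c = is_homD1[OF fg(1) i] is_homD1[OF fg(2) i] is_homD1[OF fg'(1) i] is_homD1[OF fg'(2) i]
    have "(g i * g' i) * (f' i * f i) = g i * ((g' i * f' i) * f i)"
      using c mult_carrier_mat[OF c(3) c(1)] by simp
    also have "\<dots> = 1\<^sub>m (dims A i)" using fg(3) fg'(3) i c by simp
    finally have 1: "(g i * g' i) * (f' i * f i) = 1\<^sub>m (dims A i)" .
    have "(f' i * f i) * (g i * g' i) = f' i * ((f i * g i) * g' i)"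
      using c mult_carrier_mat[OF c(2) c(4)] by simp
    also have "\<dots> = 1\<^sub>m (dims C i)" using fg(3) fg'(3) i c by simp
    finally show "(g i * g' i) * (f' i * f i) = 1\<^sub>m (dims A i) \<and> (f' i * f i) * (g i * g' i) = 1\<^sub>m (dims C i)"
      using 1 by simp
  qed
  then show ?thesis unfolding iso_def using h1 h2 by blast
qed

lemma iso_eqI:
  assumes "is_rep n l A" "\<And>i. i < n \<Longrightarrow> dims A i = dims B i" "\<And>i. i < n \<Longrightarrow> maps A i = maps B i"
  shows "iso n A B"
proof -
  have n: "\<And>i. i < n \<Longrightarrow> nxt n i < n" using nxt_lt by (metis gr_zeroI not_less_zero)
  have h: "is_hom n (\<lambda>i. 1\<^sub>m (dims A i)) A B" "is_hom n (\<lambda>i. 1\<^sub>m (dims A i)) B A"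
    using assms n unfolding is_hom_def is_rep_def by auto
  show ?thesis unfolding iso_def
    apply (rule exI[of _ "\<lambda>i. 1\<^sub>m (dims A i)"], rule exI[of _ "\<lambda>i. 1\<^sub>m (dims A i)"])
    using h assms(2) by auto
qed

lemma factors_proj_cong:
  assumes "factors_proj n l f M N" "\<And>i. i < n \<Longrightarrow> f i = f2 i"
  shows "factors_proj n l f2 M N"
  using assms unfolding factors_proj_def by metis

lemma factors_proj_comp:
  assumes "is_rep n l M'" "is_rep n l M" "is_rep n l N" "is_rep n l N'"
    "factors_proj n l f M N" "is_hom n a M' M" "is_hom n b N N'"
  shows "factors_proj n l (\<lambda>i. b i * f i * a i) M' N'"
proof -
  obtain P g h where P: "projective n l P" "is_hom n g M P" "is_hom n h P N" "\<forall>i<n. f i = h i * g i"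
    using assms(5) unfolding factors_proj_def by blast
  have rP: "is_rep n l P" using P(1) unfolding projective_def by simp
  have g': "is_hom n (\<lambda>i. g i * a i) M' P" using is_hom_comp[OF assms(1,2) rP assms(6) P(2)] .
  have h': "is_hom n (\<lambda>i. b i * h i) P N'" using is_hom_comp[OF rP assms(3,4) P(3) assms(7)] .
  have "\<forall>i<n. b i * f i * a i = (b i * h i) * (g i * a i)"
  proof (intro allI impI)
    fix i assume i: "i < n"
    note c = is_homD1[OF P(2) i] is_homD1[OF P(3) i] is_homD1[OF assms(6) i] is_homD1[OF assms(7) i]
    show "b i * f i * a i = (b i * h i) * (g i * a i)" using P(4) i c mult_carrier_mat[OF c(2) c(1)] mult_carrier_mat[OF c(1) c(3)] by simp
  qed
  then show ?thesis unfolding factors_proj_def using P(1) g' h' by blast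
qed

definition brick_core :: "nat \<Rightarrow> nat \<Rightarrow> 'k::field qrep \<Rightarrow> bool" where
  "brick_core n l M \<longleftrightarrow> (\<exists>f. is_hom n f M M \<and> \<not> factors_proj n l f M M \<and>
        (\<forall>g. is_hom n g M M \<longrightarrow>
           (\<exists>c. factors_proj n l (\<lambda>i. g i - c \<cdot>\<^sub>m f i) M M)))"

lemma stable_brick_iff: "stable_brick n l M \<longleftrightarrow> indecomposable n l M \<and> brick_core n l M"
  unfolding stable_brick_def brick_core_def by simp

lemma brick_core_iso:
  assumes "is_rep n l X" "is_rep n l U" "iso n X U" "brick_core n l U"
  shows "brick_core n l X"
proof -
  obtain a b where ab: "is_hom n a X U" "is_hom n b U X"
    "\<forall>i<n. b i * a i = 1\<^sub>m (dims X i) \<and> a i * b i = 1\<^sub>m (dims U i)"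
    using assms(3) unfolding iso_def by blast
  obtain f where f: "is_hom n f U U" "\<not> factors_proj n l f U U"
    "\<forall>g. is_hom n g U U \<longrightarrow> (\<exists>c. factors_proj n l (\<lambda>i. g i - c \<cdot>\<^sub>m f i) U U)"
    using assms(4) unfolding brick_core_def by blast
  define f' where "f' = (\<lambda>i. b i * f i * a i)"
  have hf': "is_hom n f' X X" unfolding f'_def
    apply (rule is_hom_cong[OF is_hom_comp[OF assms(1,2,1) is_hom_comp[OF assms(1,2,2) ab(1) f(1)] ab(2)]])
    subgoal for i using is_homD1[OF ab(1), of i] is_homD1[OF ab(2), of i] is_homD1[OF f(1), of i] by simp
    done
  have nf: "\<not> factors_proj n l f' X X"
  proof
    assume "factors_proj n l f' X X"
    from factors_proj_comp[OF assms(2,1,1,2) this ab(2) ab(1)]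
    have "factors_proj n l (\<lambda>i. a i * f' i * b i) U U" .
    moreover have "\<And>i. i < n \<Longrightarrow> a i * f' i * b i = f i"
    proof -
      fix i assume i: "i < n"
      note c = is_homD1[OF ab(1) i] is_homD1[OF ab(2) i] is_homD1[OF f(1) i]
      have "a i * f' i * b i = (a i * b i) * f i * (a i * b i)" unfolding f'_def
        using c mult_carrier_mat[OF c(1) c(2)] mult_carrier_mat[OF c(2) c(3)] mult_carrier_mat[OF c(3) c(1)] by simp
      then show "a i * f' i * b i = f i" using ab(3) i c by simp
    qed
    ultimately have "factors_proj n l f U U" by (rule factors_proj_cong)
    then show False using f(2) by simp
  qed
  have "\<forall>g. is_hom n g X X \<longrightarrow> (\<exists>c. factors_proj n l (\<lambda>i. g i - c \<cdot>\<^sub>m f' i) X X)"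
  proof (intro allI impI)
    fix g assume g: "is_hom n g X X"
    have g': "is_hom n (\<lambda>i. a i * g i * b i) U U"
      apply (rule is_hom_cong[OF is_hom_comp[OF assms(2,1,2) is_hom_comp[OF assms(2,1,1) ab(2) g] ab(1)]])
      subgoal for i using is_homD1[OF ab(1), of i] is_homD1[OF ab(2), of i] is_homD1[OF g, of i] by simp
      done
    obtain c where c: "factors_proj n l (\<lambda>i. (a i * g i * b i) - c \<cdot>\<^sub>m f i) U U"
      using f(3) g' by blast
    from factors_proj_comp[OF assms(1,2,2,1) c ab(1) ab(2)]
    have fp: "factors_proj n l (\<lambda>i. b i * (a i * g i * b i - c \<cdot>\<^sub>m f i) * a i) X X" .
    have "\<And>i. i < n \<Longrightarrow> b i * (a i * g i * b i - c \<cdot>\<^sub>m f i) * a i = g i - c \<cdot>\<^sub>m f' i"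
    proof -
      fix i assume i: "i < n"
      note cc = is_homD1[OF ab(1) i] is_homD1[OF ab(2) i] is_homD1[OF f(1) i] is_homD1[OF g i]
      have e1: "a i * g i * b i \<in> carrier_mat (dims U i) (dims U i)" using cc by auto
      have e2: "c \<cdot>\<^sub>m f i \<in> carrier_mat (dims U i) (dims U i)" using cc by auto
      have "b i * (a i * g i * b i - c \<cdot>\<^sub>m f i) = b i * (a i * g i * b i) - b i * (c \<cdot>\<^sub>m f i)"
        using mult_minus_distrib_mat[OF cc(2) e1 e2] .
      also have "\<dots> = b i * (a i * g i * b i) - c \<cdot>\<^sub>m (b i * f i)"
        using mult_smult_distrib[OF cc(2) cc(3)] by simp
      finally have s1: "b i * (a i * g i * b i - c \<cdot>\<^sub>m f i) = b i * (a i * g i * b i) - c \<cdot>\<^sub>m (b i * f i)" .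
      have e3: "b i * (a i * g i * b i) \<in> carrier_mat (dims X i) (dims U i)" using cc by auto
      have e4: "c \<cdot>\<^sub>m (b i * f i) \<in> carrier_mat (dims X i) (dims U i)" using cc by auto
      have "(b i * (a i * g i * b i) - c \<cdot>\<^sub>m (b i * f i)) * a i
          = b i * (a i * g i * b i) * a i - c \<cdot>\<^sub>m (b i * f i) * a i"
        using minus_mult_distrib_mat[OF e3 e4 cc(1)] .
      also have "c \<cdot>\<^sub>m (b i * f i) * a i = c \<cdot>\<^sub>m (b i * f i * a i)"
        using mult_smult_assoc_mat[of "b i * f i" "dims X i" "dims U i" "a i" "dims X i" c] cc by auto
      also have "b i * (a i * g i * b i) * a i = (b i * a i) * g i * (b i * a i)"
        using cc mult_carrier_mat[OF cc(2) cc(1)] mult_carrier_mat[OF cc(4) cc(2)] mult_carrier_mat[OF cc(1) cc(4)] by simp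
      also have "\<dots> = g i" using ab(3) i cc by simp
      finally show "b i * (a i * g i * b i - c \<cdot>\<^sub>m f i) * a i = g i - c \<cdot>\<^sub>m f' i"
        using s1 unfolding f'_def by simp
    qed
    then have "factors_proj n l (\<lambda>i. g i - c \<cdot>\<^sub>m f' i) X X"
      by (rule factors_proj_cong[OF fp])
    then show "\<exists>c. factors_proj n l (\<lambda>i. g i - c \<cdot>\<^sub>m f' i) X X" by blast
  qed
  then show ?thesis unfolding brick_core_def using hf' nf by blast
qed

lemma stable_hom_zero_iso:
  assumes "is_rep n l X" "is_rep n l Y" "is_rep n l U1" "is_rep n l U2"
    "iso n X U1" "iso n Y U2" "stable_hom_zero n l U1 U2"
  shows "stable_hom_zero n l X Y"
  unfolding stable_hom_zero_def
proof (intro allI impI)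
  fix f assume f: "is_hom n f X Y"
  obtain a1 b1 where ab1: "is_hom n a1 X U1" "is_hom n b1 U1 X"
    "\<forall>i<n. b1 i * a1 i = 1\<^sub>m (dims X i) \<and> a1 i * b1 i = 1\<^sub>m (dims U1 i)"
    using assms(5) unfolding iso_def by blast
  obtain a2 b2 where ab2: "is_hom n a2 Y U2" "is_hom n b2 U2 Y"
    "\<forall>i<n. b2 i * a2 i = 1\<^sub>m (dims Y i) \<and> a2 i * b2 i = 1\<^sub>m (dims U2 i)"
    using assms(6) unfolding iso_def by blast
  have h: "is_hom n (\<lambda>i. a2 i * f i * b1 i) U1 U2"
    apply (rule is_hom_cong[OF is_hom_comp[OF assms(3,1,4) ab1(2) is_hom_comp[OF assms(1,2,4) f ab2(1)]]])
    subgoal for i using is_homD1[OF ab1(2), of i] is_homD1[OF ab2(1), of i] is_homD1[OF f, of i] by simp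
    done
  then have "factors_proj n l (\<lambda>i. a2 i * f i * b1 i) U1 U2" using assms(7) unfolding stable_hom_zero_def by blast
  from factors_proj_comp[OF assms(1,3,4,2) this ab1(1) ab2(2)]
  have fp: "factors_proj n l (\<lambda>i. b2 i * (a2 i * f i * b1 i) * a1 i) X Y" .
  have "\<And>i. i < n \<Longrightarrow> b2 i * (a2 i * f i * b1 i) * a1 i = f i"
  proof -
    fix i assume i: "i < n"
    note cc = is_homD1[OF ab1(1) i] is_homD1[OF ab1(2) i] is_homD1[OF ab2(1) i] is_homD1[OF ab2(2) i] is_homD1[OF f i]
    have "b2 i * (a2 i * f i * b1 i) * a1 i = (b2 i * a2 i) * f i * (b1 i * a1 i)"
      using cc mult_carrier_mat[OF cc(4) cc(3)] mult_carrier_mat[OF cc(2) cc(1)] mult_carrier_mat[OF cc(5) cc(2)]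
        mult_carrier_mat[OF cc(3) cc(5)] by simp
    then show "b2 i * (a2 i * f i * b1 i) * a1 i = f i" using ab1(3) ab2(3) i cc by simp
  qed
  then show "factors_proj n l f X Y" by (rule factors_proj_cong[OF fp])
qed

lemma right_inv_dim:
  assumes A: "(A :: 'a :: field mat) \<in> carrier_mat r c" and B: "B \<in> carrier_mat c r" and AB: "A * B = 1\<^sub>m r"
  shows "r \<le> c"
proof (rule ccontr)
  assume "\<not> r \<le> c"
  then have cr: "c < r" by simp
  define A' where "A' = mat r r (\<lambda>(i,j). if j < c then A $$ (i,j) else 0)"
  define B' where "B' = mat r r (\<lambda>(i,j). if i < c then B $$ (i,j) else 0)"
  have cA': "A' \<in> carrier_mat r r" "B' \<in> carrier_mat r r" unfolding A'_def B'_def by auto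
  have "A' * B' = 1\<^sub>m r"
  proof (rule eq_matI)
    fix i j assume ij: "i < dim_row (1\<^sub>m r)" "j < dim_col (1\<^sub>m r)"
    then have i: "i < r" and j: "j < r" by auto
    have "(A' * B') $$ (i,j) = (\<Sum>k\<in>{0..<r}. A' $$ (i,k) * B' $$ (k,j))"
      using i j cA' by (simp add: scalar_prod_def)
    also have "\<dots> = (\<Sum>k\<in>{0..<c}. A' $$ (i,k) * B' $$ (k,j))"
      using cr i j by (intro sum.mono_neutral_right) (auto simp: A'_def B'_def)
    also have "\<dots> = (\<Sum>k\<in>{0..<c}. A $$ (i,k) * B $$ (k,j))"
      using i j cr by (intro sum.cong) (auto simp: A'_def B'_def)
    also have "\<dots> = (A * B) $$ (i,j)" using i j A B by (simp add: scalar_prod_def)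
    finally show "(A' * B') $$ (i,j) = 1\<^sub>m r $$ (i,j)" using AB by simp
  qed (insert cA', auto)
  then have "det A' * det B' = 1" using det_mult[OF cA'] by simp
  moreover have "det A' = 0"
  proof -
    have "A' *\<^sub>v unit_vec r (r - 1) = 0\<^sub>v r"
      using cr by (intro eq_vecI) (auto simp: A'_def scalar_prod_right_unit)
    moreover have "unit_vec r (r - 1) \<noteq> (0\<^sub>v r :: 'a vec)" using cr
      by (metis diff_less index_unit_vec(1) index_zero_vec(1) less_nat_zero_code not_gr_zero zero_neq_one)
    ultimately show ?thesis using det_0_iff_vec_prod_zero_field[OF cA'(1)] unit_vec_carrier[of r "r - 1"] by blast
  qed
  ultimately show False by simp
qed

lemma iso_dims:
  assumes "iso n X Y" "i < n"
  shows "dims X i = dims Y i"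
proof -
  obtain a b where ab: "is_hom n a X Y" "is_hom n b Y X"
    "\<forall>i<n. b i * a i = 1\<^sub>m (dims X i) \<and> a i * b i = 1\<^sub>m (dims Y i)"
    using assms(1) unfolding iso_def by blast
  note c = is_homD1[OF ab(1) assms(2)] is_homD1[OF ab(2) assms(2)]
  have "dims X i \<le> dims Y i" using right_inv_dim[OF c(2) c(1)] ab(3) assms(2) by simp
  moreover have "dims Y i \<le> dims X i" using right_inv_dim[OF c(1) c(2)] ab(3) assms(2) by simp
  ultimately show ?thesis by simp
qed

lemma iso_len: "iso n X Y \<Longrightarrow> len n X = len n Y"
  unfolding len_def using iso_dims by (metis lessThan_iff sum.cong)

lemma indecomposable_iso:
  assumes X: "is_rep n l X" and iso: "iso n X Y" and Y: "indecomposable n l Y"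
  shows "indecomposable n l X"
proof -
  obtain a b where ab: "is_hom n a X Y" "is_hom n b Y X"
    "\<forall>i<n. b i * a i = 1\<^sub>m (dims X i) \<and> a i * b i = 1\<^sub>m (dims Y i)"
    using iso unfolding iso_def by blast
  have rY: "is_rep n l Y" using Y unfolding indecomposable_def by simp
  have nz: "\<not> is_zero_rep n X"
  proof
    assume z: "is_zero_rep n X"
    obtain i where i: "i < n" "dims Y i \<noteq> 0" using Y unfolding indecomposable_def is_zero_rep_def by blast
    have "dims X i = dims Y i" using iso_dims[OF iso i(1)] .
    then show False using z i unfolding is_zero_rep_def by simp
  qed
  have "\<forall>e. is_hom n e X X \<longrightarrow> (\<forall>i<n. e i * e i = e i) \<longrightarrow>
        (\<forall>i<n. e i = 0\<^sub>m (dims X i) (dims X i)) \<or> (\<forall>i<n. e i = 1\<^sub>m (dims X i))"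
  proof (intro allI impI)
    fix e assume e: "is_hom n e X X" and idem: "\<forall>i<n. e i * e i = e i"
    define e' where "e' = (\<lambda>i. a i * e i * b i)"
    have he': "is_hom n e' Y Y" unfolding e'_def
      apply (rule is_hom_cong[OF is_hom_comp[OF rY X rY is_hom_comp[OF rY X X ab(2) e] ab(1)]])
      subgoal for i using is_homD1[OF ab(1), of i] is_homD1[OF ab(2), of i] is_homD1[OF e, of i] by simp
      done
    have idem': "\<forall>i<n. e' i * e' i = e' i"
    proof (intro allI impI)
      fix i assume i: "i < n"
      note cc = is_homD1[OF ab(1) i] is_homD1[OF ab(2) i] is_homD1[OF e i]
      have "e' i * e' i = a i * (e i * (b i * a i) * e i) * b i" unfolding e'_def using cc by simp
      also have "\<dots> = a i * (e i * e i) * b i" using ab(3) i cc by simp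
      also have "\<dots> = e' i" unfolding e'_def using idem i by simp
      finally show "e' i * e' i = e' i" .
    qed
    have bk: "\<And>i. i < n \<Longrightarrow> e i = b i * e' i * a i"
    proof -
      fix i assume i: "i < n"
      note cc = is_homD1[OF ab(1) i] is_homD1[OF ab(2) i] is_homD1[OF e i]
      have "b i * e' i * a i = (b i * a i) * e i * (b i * a i)" unfolding e'_def using cc by simp
      then show "e i = b i * e' i * a i" using ab(3) i cc by simp
    qed
    from Y he' idem' have "(\<forall>i<n. e' i = 0\<^sub>m (dims Y i) (dims Y i)) \<or> (\<forall>i<n. e' i = 1\<^sub>m (dims Y i))"
      unfolding indecomposable_def by blast
    then show "(\<forall>i<n. e i = 0\<^sub>m (dims X i) (dims X i)) \<or> (\<forall>i<n. e i = 1\<^sub>m (dims X i))"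
    proof
      assume z: "\<forall>i<n. e' i = 0\<^sub>m (dims Y i) (dims Y i)"
      have "\<forall>i<n. e i = 0\<^sub>m (dims X i) (dims X i)"
      proof (intro allI impI)
        fix i assume i: "i < n"
        note cc = is_homD1[OF ab(1) i] is_homD1[OF ab(2) i]
        show "e i = 0\<^sub>m (dims X i) (dims X i)" using bk[OF i] z i cc by simp
      qed
      then show ?thesis by simp
    next
      assume z: "\<forall>i<n. e' i = 1\<^sub>m (dims Y i)"
      have "\<forall>i<n. e i = 1\<^sub>m (dims X i)"
      proof (intro allI impI)
        fix i assume i: "i < n"
        note cc = is_homD1[OF ab(1) i] is_homD1[OF ab(2) i]
        show "e i = 1\<^sub>m (dims X i)" using bk[OF i] z i cc ab(3) by simp
      qed
      then show ?thesis by simp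
    qed
  qed
  then show ?thesis unfolding indecomposable_def using X nz by blast
qed

lemma projective_iso:
  assumes X: "is_rep n l X" and iso: "iso n X Y" and Y: "projective n l Y"
  shows "projective n l X"
proof -
  obtain a b where ab: "is_hom n a X Y" "is_hom n b Y X"
    "\<forall>i<n. b i * a i = 1\<^sub>m (dims X i) \<and> a i * b i = 1\<^sub>m (dims Y i)"
    using iso unfolding iso_def by blast
  have rY: "is_rep n l Y" using Y unfolding projective_def by simp
  have "\<forall>X' Y' g f. is_rep n l X' \<longrightarrow> is_rep n l Y' \<longrightarrow> is_epi n g X' Y' \<longrightarrow> is_hom n f X Y' \<longrightarrow>
        (\<exists>h. is_hom n h X X' \<and> (\<forall>i<n. g i * h i = f i))"
  proof (intro allI impI)
    fix X' Y' g f assume r: "is_rep n l X'" "is_rep n l Y'" and g: "is_epi n g X' Y'" and f: "is_hom n f X Y'"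
    have fb: "is_hom n (\<lambda>i. f i * b i) Y Y'" using is_hom_comp[OF rY X r(2) ab(2) f] .
    obtain h where h: "is_hom n h Y X'" "\<forall>i<n. g i * h i = f i * b i"
      using Y r g fb unfolding projective_def by blast
    have ha: "is_hom n (\<lambda>i. h i * a i) X X'" using is_hom_comp[OF X rY r(1) ab(1) h(1)] .
    have "\<forall>i<n. g i * (h i * a i) = f i"
    proof (intro allI impI)
      fix i assume i: "i < n"
      have gh: "is_hom n g X' Y'" using g unfolding is_epi_def by simp
      note cc = is_homD1[OF ab(1) i] is_homD1[OF ab(2) i] is_homD1[OF h(1) i] is_homD1[OF f i] is_homD1[OF gh i]
      have "g i * (h i * a i) = (g i * h i) * a i" using cc by simp
      also have "\<dots> = f i * (b i * a i)" using h(2) i cc by simp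
      also have "\<dots> = f i" using ab(3) i cc by simp
      finally show "g i * (h i * a i) = f i" .
    qed
    then show "\<exists>h. is_hom n h X X' \<and> (\<forall>i<n. g i * h i = f i)" using ha by blast
  qed
  then show ?thesis unfolding projective_def using X by blast
qed

definition rr :: "nat \<Rightarrow> nat \<Rightarrow> nat \<Rightarrow> nat" where
  "rr n t j = nat ((int j - int t) mod int n)"

definition Ud :: "nat \<Rightarrow> nat \<Rightarrow> nat \<Rightarrow> nat \<Rightarrow> nat" where
  "Ud n t m j = (m + n - 1 - rr n t j) div n"

definition Um :: "nat \<Rightarrow> nat \<Rightarrow> nat \<Rightarrow> nat \<Rightarrow> 'k::field mat" where
  "Um n t m j = mat (Ud n t m (nxt n j)) (Ud n t m j)
     (\<lambda>(a,b). if rr n t (nxt n j) + n*a = rr n t j + n*b + 1 then 1 else 0)"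

definition U :: "nat \<Rightarrow> nat \<Rightarrow> nat \<Rightarrow> 'k::field qrep" where
  "U n t m = \<lparr>dims = Ud n t m, maps = Um n t m\<rparr>"

lemma rr_lt: "0 < n \<Longrightarrow> rr n t j < n"
  unfolding rr_def by (simp add: nat_less_iff)

lemma int_mod_shift:
  fixes a b c n :: int
  shows "a mod n = (b - c) mod n \<longleftrightarrow> (c + a) mod n = b mod n"
proof
  assume h: "a mod n = (b - c) mod n"
  have "(c + a) mod n = (c + a mod n) mod n" by (simp add: mod_add_right_eq)
  also have "\<dots> = (c + (b - c) mod n) mod n" using h by simp
  also have "\<dots> = (c + (b - c)) mod n" by (simp add: mod_add_right_eq)
  finally show "(c + a) mod n = b mod n" by simp
next
  assume h: "(c + a) mod n = b mod n"
  have "a mod n = ((c + a) - c) mod n" by simp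
  also have "\<dots> = ((c + a) mod n - c) mod n" by (simp add: mod_diff_left_eq)
  also have "\<dots> = (b mod n - c) mod n" using h by simp
  also have "\<dots> = (b - c) mod n" by (simp add: mod_diff_left_eq)
  finally show "a mod n = (b - c) mod n" .
qed

lemma rr_char: "0 < n \<Longrightarrow> (k mod n = rr n t j) \<longleftrightarrow> ((t + k) mod n = j mod n)"
proof -
  assume n: "0 < n"
  have nn: "0 \<le> (int j - int t) mod int n" using n by simp
  have "(k mod n = rr n t j) \<longleftrightarrow> int (k mod n) = (int j - int t) mod int n"
    unfolding rr_def using nn by (metis int_nat_eq nat_int)
  also have "\<dots> \<longleftrightarrow> int k mod int n = (int j - int t) mod int n" by (simp add: zmod_int)
  also have "\<dots> \<longleftrightarrow> (int t + int k) mod int n = int j mod int n" by (rule int_mod_shift)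
  also have "\<dots> \<longleftrightarrow> int ((t + k) mod n) = int (j mod n)" by (simp add: zmod_int)
  also have "\<dots> \<longleftrightarrow> (t + k) mod n = j mod n" by (rule of_nat_eq_iff)
  finally show ?thesis .
qed

lemma pos_decomp: "0 < n \<Longrightarrow> (t + k) mod n = j mod n \<Longrightarrow> rr n t j + n * (k div n) = k"
  using rr_char[of n k t j] by (metis add.commute div_mult_mod_eq mult.commute)

lemma pos_vert: "0 < n \<Longrightarrow> (t + (rr n t j + n * a)) mod n = j mod n"
  using rr_char[of n "rr n t j + n * a" t j] rr_lt[of n t j] by simp

lemma pos_div: "0 < n \<Longrightarrow> (rr n t j + n * a) div n = a"
  using rr_lt[of n t j] by simp

lemma Ud_iff: "0 < n \<Longrightarrow> q < Ud n t m j \<longleftrightarrow> rr n t j + n * q < m"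
proof -
  assume n: "0 < n"
  have r: "rr n t j < n" using rr_lt[OF n] .
  have "q < Ud n t m j \<longleftrightarrow> Suc q \<le> (m + n - 1 - rr n t j) div n" unfolding Ud_def by (simp add: Suc_le_eq)
  also have "\<dots> \<longleftrightarrow> Suc q * n \<le> m + n - 1 - rr n t j" using n by (simp add: less_eq_div_iff_mult_less_eq)
  also have "\<dots> \<longleftrightarrow> rr n t j + n * q < m" using r by (auto simp: algebra_simps)
  finally show ?thesis .
qed

lemma mod_adds_cancel: "(x + s) mod n = (y + s) mod (n::nat) \<Longrightarrow> x mod n = y mod n"
proof -
  assume h: "(x + s) mod n = (y + s) mod n"
  have h': "(int x + int s) mod int n = (int y + int s) mod int n"
    using h by (metis of_nat_add zmod_int)
  have "int x mod int n = ((int x + int s) - int s) mod int n" by simp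
  also have "\<dots> = ((int x + int s) mod int n - int s) mod int n" by (simp add: mod_diff_left_eq)
  also have "\<dots> = ((int y + int s) mod int n - int s) mod int n" using h' by simp
  also have "\<dots> = int y mod int n" by (simp add: mod_diff_left_eq)
  finally show ?thesis by (metis of_nat_eq_iff zmod_int)
qed

lemma mod_add1_cancel: "(x + 1) mod n = (y + 1) mod (n::nat) \<Longrightarrow> x mod n = y mod n"
  by (rule mod_adds_cancel)

lemma index_unit_vec'[simp]: "j < n \<Longrightarrow> unit_vec n i $ j = (if j = i then 1 else 0)"
  by (simp add: unit_vec_def)

lemma U_dims[simp]: "dims (U n t m) = Ud n t m" and U_maps[simp]: "maps (U n t m) = Um n t m"
  unfolding U_def by simp_all

lemma Um_carrier[simp]: "Um n t m j \<in> carrier_mat (Ud n t m (nxt n j)) (Ud n t m j)"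
  unfolding Um_def by simp

lemma Um_dims[simp]: "dim_row (Um n t m j) = Ud n t m (nxt n j)" "dim_col (Um n t m j) = Ud n t m j"
  unfolding Um_def by simp_all

lemma PU_carrier:
  assumes n: "0 < n" and j: "j < n"
  shows "pathmap n (U n t m) j s \<in> carrier_mat (Ud n t m ((j+s) mod n)) (Ud n t m j)"
proof (induction s)
  case 0
  then show ?case using j by simp
next
  case (Suc s)
  have e: "nxt n ((j+s) mod n) = (j + Suc s) mod n" unfolding nxt_def by (simp add: mod_simps)
  show ?case using Suc Um_carrier[of n t m "(j+s) mod n"] e by auto
qed

lemma sum_single:
  assumes "finite S" "\<And>c. c \<in> S \<Longrightarrow> f c = (if c = c0 then g else 0)"
  shows "sum f S = (if c0 \<in> S then g else 0)"
proof -
  have "sum f S = (\<Sum>c\<in>S. if c = c0 then g else 0)" using assms(2) by (rule sum.cong[OF refl])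
  also have "\<dots> = (if c0 \<in> S then g else 0)" using assms(1) by (simp add: sum.delta')
  finally show ?thesis .
qed

lemma PU_entry:
  assumes n: "0 < n" and j: "j < n"
  shows "a < Ud n t m ((j+s) mod n) \<Longrightarrow> b < Ud n t m j \<Longrightarrow>
    pathmap n (U n t m :: 'k qrep) j s $$ (a,b) =
      (if rr n t ((j+s) mod n) + n*a = rr n t j + n*b + s then (1::'k::field) else 0)"
proof (induction s arbitrary: a)
  case 0
  then show ?case using j n by simp
next
  case (Suc s)
  let ?J = "(j+s) mod n"
  have J: "?J < n" using n by simp
  have e: "nxt n ?J = (j + Suc s) mod n" unfolding nxt_def by (simp add: mod_simps)
  let ?kA = "rr n t (nxt n ?J) + n * a"
  let ?kb = "rr n t j + n * b"
  define c0 where "c0 = (?kb + s) div n"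
  have vb: "(t + ?kb) mod n = j" using pos_vert[OF n, of t j b] j by simp
  have vbs: "(t + (?kb + s)) mod n = ?J mod n"
  proof -
    have "(t + (?kb + s)) mod n = ((t + ?kb) mod n + s) mod n" by (simp add: mod_simps add.assoc)
    then show ?thesis using vb by simp
  qed
  have c0d: "rr n t ?J + n * c0 = ?kb + s" unfolding c0_def using pos_decomp[OF n vbs] .
  have aU: "a < Ud n t m (nxt n ?J)" using Suc.prems(1) e by simp
  have kAm: "?kA < m" using aU Ud_iff[OF n] by blast
  have PC: "pathmap n (U n t m :: 'k qrep) j s \<in> carrier_mat (Ud n t m ?J) (Ud n t m j)" using PU_carrier[OF n j] .
  have "pathmap n (U n t m :: 'k qrep) j (Suc s) $$ (a,b) = ((Um n t m ?J :: 'k mat) * pathmap n (U n t m :: 'k qrep) j s) $$ (a,b)" by simp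
  also have "\<dots> = (\<Sum>c\<in>{0..<Ud n t m ?J}. (Um n t m ?J :: 'k mat) $$ (a,c) * pathmap n (U n t m :: 'k qrep) j s $$ (c,b))"
  proof -
    have d1: "a < dim_row ((Um n t m ?J :: 'k mat))" "b < dim_col (pathmap n (U n t m :: 'k qrep) j s)" using aU Suc.prems(2) carrier_matD[OF PC] by auto
    have "((Um n t m ?J :: 'k mat) * pathmap n (U n t m :: 'k qrep) j s) $$ (a,b) = row ((Um n t m ?J :: 'k mat)) a \<bullet> col (pathmap n (U n t m :: 'k qrep) j s) b"
      using index_mult_mat(1)[OF d1] .
    also have "\<dots> = (\<Sum>c\<in>{0..<Ud n t m ?J}. row ((Um n t m ?J :: 'k mat)) a $ c * col (pathmap n (U n t m :: 'k qrep) j s) b $ c)"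
      unfolding scalar_prod_def using PC by simp
    also have "\<dots> = (\<Sum>c\<in>{0..<Ud n t m ?J}. (Um n t m ?J :: 'k mat) $$ (a,c) * pathmap n (U n t m :: 'k qrep) j s $$ (c,b))"
      using d1 PC by (intro sum.cong) auto
    finally show ?thesis .
  qed
  also have "\<dots> = (if c0 \<in> {0..<Ud n t m ?J} then (if ?kA = ?kb + s + 1 then 1 else 0) else 0)"
  proof (rule sum_single)
    fix c assume c: "c \<in> {0..<Ud n t m ?J}"
    have ent: "(Um n t m ?J :: 'k mat) $$ (a,c) = (if ?kA = rr n t ?J + n*c + 1 then 1 else 0)"
      using c aU unfolding Um_def by simp
    have ent2: "pathmap n (U n t m :: 'k qrep) j s $$ (c,b) = (if rr n t ?J + n*c = ?kb + s then 1 else 0)"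
      using Suc.IH[of c] c Suc.prems(2) by simp
    have "rr n t ?J + n*c = ?kb + s \<longleftrightarrow> n*c = n*c0"
      using c0d by linarith
    also have "\<dots> \<longleftrightarrow> c = c0" using n by simp
    finally have cc: "rr n t ?J + n*c = ?kb + s \<longleftrightarrow> c = c0" .
    then show "(Um n t m ?J :: 'k mat) $$ (a,c) * pathmap n (U n t m :: 'k qrep) j s $$ (c,b) =
        (if c = c0 then (if ?kA = ?kb + s + 1 then 1 else 0) else 0)"
      using ent ent2 c0d cc by auto
  qed simp
  also have "\<dots> = (if ?kA = ?kb + Suc s then 1 else 0)"
  proof (cases "c0 < Ud n t m ?J")
    case False
    then have "\<not> ?kb + s < m" using Ud_iff[OF n, of c0 t m ?J] c0d by simp
    then show ?thesis using False kAm by auto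
  qed simp
  finally show ?case using e by simp
qed

lemma U_rep:
  assumes n: "0 < n" and m: "m \<le> l + 1"
  shows "is_rep n l (U n t m :: 'k::field qrep)"
  unfolding is_rep_def
proof (intro conjI allI impI)
  fix i assume i: "i < n"
  show "maps (U n t m :: 'k qrep) i \<in> carrier_mat (dims (U n t m :: 'k qrep) (nxt n i)) (dims (U n t m :: 'k qrep) i)" by simp
  show "pathmap n (U n t m :: 'k qrep) i (Suc l) = 0\<^sub>m (dims (U n t m :: 'k qrep) ((i + Suc l) mod n)) (dims (U n t m :: 'k qrep) i)"
  proof (rule eq_matI)
    fix a b assume ab: "a < dim_row (0\<^sub>m (dims (U n t m :: 'k qrep) ((i + Suc l) mod n)) (dims (U n t m :: 'k qrep) i) :: 'k mat)"
       "b < dim_col (0\<^sub>m (dims (U n t m :: 'k qrep) ((i + Suc l) mod n)) (dims (U n t m :: 'k qrep) i) :: 'k mat)"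
    then have a: "a < Ud n t m ((i + Suc l) mod n)" and b: "b < Ud n t m i" by auto
    have "rr n t ((i + Suc l) mod n) + n * a < m" using a Ud_iff[OF n] by blast
    then have "rr n t ((i + Suc l) mod n) + n * a \<noteq> rr n t i + n * b + Suc l" using m by linarith
    then show "pathmap n (U n t m :: 'k qrep) i (Suc l) $$ (a, b) = 0\<^sub>m (dims (U n t m :: 'k qrep) ((i + Suc l) mod n)) (dims (U n t m :: 'k qrep) i) $$ (a, b)"
      using PU_entry[OF n i a b] a b by simp
  qed (use PU_carrier[OF n i, of t m "Suc l"] in auto)
qed

lemma rr_self: "rr n t t = 0" unfolding rr_def by simp

lemma vert_shift:
  assumes n: "0 < n" and j: "j < n"
  shows "(t + (rr n t j + n * b + s)) mod n = (j + s) mod n"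
proof -
  have "(t + (rr n t j + n * b + s)) mod n = ((t + (rr n t j + n * b)) mod n + s) mod n"
    by (simp add: mod_simps add.assoc)
  also have "\<dots> = (j + s) mod n" using pos_vert[OF n, of t j b] j by simp
  finally show ?thesis .
qed

lemma PU_vec:
  assumes n: "0 < n" and j: "j < n" and z: "z \<in> carrier_vec (Ud n t m j)"
    and a: "a < Ud n t m ((j+s) mod n)"
  shows "(pathmap n (U n t m :: 'k::field qrep) j s *\<^sub>v z) $ a =
     (if s \<le> rr n t ((j+s) mod n) + n*a then z $ ((rr n t ((j+s) mod n) + n*a - s) div n) else 0)"
proof -
  let ?P = "pathmap n (U n t m :: 'k qrep) j s"
  let ?kA = "rr n t ((j+s) mod n) + n*a"
  have PC: "?P \<in> carrier_mat (Ud n t m ((j+s) mod n)) (Ud n t m j)" using PU_carrier[OF n j] .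
  have kAm: "?kA < m" using a Ud_iff[OF n] by blast
  have "(?P *\<^sub>v z) $ a = row ?P a \<bullet> z" using a PC by simp
  also have "\<dots> = (\<Sum>b\<in>{0..<Ud n t m j}. ?P $$ (a,b) * z $ b)"
    unfolding scalar_prod_def using z PC a by (intro sum.cong) auto
  also have "\<dots> = (if s \<le> ?kA then z $ ((?kA - s) div n) else 0)"
  proof (cases "s \<le> ?kA")
    case True
    define b0 where "b0 = (?kA - s) div n"
    have v1: "(t + ?kA) mod n = (j + s) mod n" using pos_vert[OF n, of t "(j+s) mod n" a] by simp
    have "((t + (?kA - s)) + s) mod n = (j + s) mod n" using v1 True by simp
    then have v2: "(t + (?kA - s)) mod n = j mod n" by (rule mod_adds_cancel)
    have b0d: "rr n t j + n * b0 = ?kA - s" unfolding b0_def using pos_decomp[OF n v2] .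
    have b0U: "b0 < Ud n t m j" using Ud_iff[OF n] b0d kAm by simp
    have "(\<Sum>b\<in>{0..<Ud n t m j}. ?P $$ (a,b) * z $ b) = (if b0 \<in> {0..<Ud n t m j} then z $ b0 else 0)"
    proof (rule sum_single)
      fix b assume b: "b \<in> {0..<Ud n t m j}"
      have "?kA = rr n t j + n*b + s \<longleftrightarrow> n * b = n * b0" using b0d True by linarith
      also have "\<dots> \<longleftrightarrow> b = b0" using n by simp
      finally have cc: "?kA = rr n t j + n*b + s \<longleftrightarrow> b = b0" .
      show "?P $$ (a,b) * z $ b = (if b = b0 then z $ b0 else 0)"
        using PU_entry[OF n j a, of b] b cc by auto
    qed simp
    then show ?thesis using True b0U unfolding b0_def by simp
  next
    case False
    have "(\<Sum>b\<in>{0..<Ud n t m j}. ?P $$ (a,b) * z $ b) = 0"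
    proof (rule sum.neutral, intro ballI)
      fix b assume b: "b \<in> {0..<Ud n t m j}"
      have "?kA \<noteq> rr n t j + n*b + s" using False by linarith
      then show "?P $$ (a,b) * z $ b = 0" using PU_entry[OF n j a, of b] b by auto
    qed
    then show ?thesis using False by simp
  qed
  finally show ?thesis .
qed

lemma PU_unit:
  assumes n: "0 < n" and j: "j < n" and b: "b < Ud n t m j"
  shows "pathmap n (U n t m :: 'k::field qrep) j s *\<^sub>v unit_vec (Ud n t m j) b =
     (if rr n t j + n*b + s < m then unit_vec (Ud n t m ((j+s) mod n)) ((rr n t j + n*b + s) div n)
      else 0\<^sub>v (Ud n t m ((j+s) mod n)))"
proof -
  let ?P = "pathmap n (U n t m :: 'k qrep) j s"
  let ?kb = "rr n t j + n*b"
  have PC: "?P \<in> carrier_mat (Ud n t m ((j+s) mod n)) (Ud n t m j)" using PU_carrier[OF n j] .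
  have e: "?P *\<^sub>v unit_vec (Ud n t m j) b = col ?P b" using mat_vec_unit[OF PC b] .
  show ?thesis unfolding e
  proof (rule eq_vecI)
    fix a assume "a < dim_vec (if ?kb + s < m then unit_vec (Ud n t m ((j+s) mod n)) ((?kb + s) div n)
      else 0\<^sub>v (Ud n t m ((j+s) mod n)) :: 'k vec)"
    then have a: "a < Ud n t m ((j+s) mod n)" by (auto split: if_splits)
    let ?kA = "rr n t ((j+s) mod n) + n*a"
    have kAm: "?kA < m" using a Ud_iff[OF n] by blast
    have ent: "col ?P b $ a = (if ?kA = ?kb + s then 1 else 0)"
      using PU_entry[OF n j a b] a b PC by auto
    show "col ?P b $ a = (if ?kb + s < m then unit_vec (Ud n t m ((j+s) mod n)) ((?kb + s) div n)
      else 0\<^sub>v (Ud n t m ((j+s) mod n))) $ a"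
    proof (cases "?kb + s < m")
      case True
      have v: "(t + (?kb + s)) mod n = ((j+s) mod n) mod n" using vert_shift[OF n j] by simp
      have d: "rr n t ((j+s) mod n) + n * ((?kb + s) div n) = ?kb + s" using pos_decomp[OF n v] .
      have "?kA = ?kb + s \<longleftrightarrow> a = (?kb + s) div n"
      proof
        assume "?kA = ?kb + s"
        then show "a = (?kb + s) div n" using pos_div[OF n, of t "(j+s) mod n" a] by simp
      next
        assume "a = (?kb + s) div n"
        then show "?kA = ?kb + s" using d by simp
      qed
      then show ?thesis using ent True a by auto
    next
      case False
      then show ?thesis using ent kAm a by auto
    qed
  qed (use PC in auto)
qed

lemma Ud_t_pos: "0 < n \<Longrightarrow> 0 < m \<Longrightarrow> 0 < Ud n t m t"
  using Ud_iff[of n 0 t m t] rr_self[of n t] by simp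

lemma PU_e0:
  assumes n: "0 < n" and t: "t < n" and m: "0 < m"
  shows "pathmap n (U n t m :: 'k::field qrep) t s *\<^sub>v unit_vec (Ud n t m t) 0 =
     (if s < m then unit_vec (Ud n t m ((t+s) mod n)) (s div n) else 0\<^sub>v (Ud n t m ((t+s) mod n)))"
proof -
  have eq: "rr n t t + n*0 + s = s" by (simp add: rr_self)
  show ?thesis using PU_unit[OF n t Ud_t_pos[OF n m], of s] unfolding eq by simp
qed

lemma Um_unit:
  assumes n: "0 < n" and j: "j < n" and b: "b < Ud n t m j"
  shows "(Um n t m j :: 'k::field mat) *\<^sub>v unit_vec (Ud n t m j) b =
     (if rr n t j + n*b + 1 < m then unit_vec (Ud n t m (nxt n j)) ((rr n t j + n*b + 1) div n)
      else 0\<^sub>v (Ud n t m (nxt n j)))"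
proof -
  have "pathmap n (U n t m :: 'k qrep) j 1 = Um n t m j" using j Um_carrier[of n t m j] by simp
  then show ?thesis using PU_unit[OF n j b, of 1] j unfolding nxt_def by simp
qed

lemma mat_vec_zero: "(A :: 'a :: field mat) \<in> carrier_mat r c \<Longrightarrow> A *\<^sub>v 0\<^sub>v c = 0\<^sub>v r"
  by (intro eq_vecI) (auto simp: scalar_prod_def)

lemma vec_eq_dims: "(v :: 'a vec) \<in> carrier_vec k \<Longrightarrow> dim_vec v = k" by auto

lemma hom_from_U:
  assumes n: "0 < n" and t: "t < n" and m: "0 < m" and Y: "is_rep n l Y"
    and y: "y \<in> carrier_vec (dims Y t)"
    and py: "pathmap n Y t m *\<^sub>v y = 0\<^sub>v (dims Y ((t+m) mod n))"
  shows "\<exists>h. is_hom n h (U n t m :: 'k::field qrep) Y \<and> h t *\<^sub>v unit_vec (Ud n t m t) 0 = y"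
proof -
  define h where "h = (\<lambda>j. mat (dims Y j) (Ud n t m j) (\<lambda>(c,b). (pathmap n Y t (rr n t j + n*b) *\<^sub>v y) $ c))"
  have hc: "\<And>j. h j \<in> carrier_mat (dims Y j) (Ud n t m j)" unfolding h_def by simp
  have PY: "\<And>s. pathmap n Y t s \<in> carrier_mat (dims Y ((t+s) mod n)) (dims Y t)"
    using pathmap_carrier[OF Y t] .
  have hcol: "\<And>j b. j < n \<Longrightarrow> b < Ud n t m j \<Longrightarrow> h j *\<^sub>v unit_vec (Ud n t m j) b = pathmap n Y t (rr n t j + n*b) *\<^sub>v y"
  proof -
    fix j b assume j: "j < n" and b: "b < Ud n t m j"
    have v: "(t + (rr n t j + n*b)) mod n = j" using pos_vert[OF n, of t j b] j by simp
    have d: "pathmap n Y t (rr n t j + n*b) *\<^sub>v y \<in> carrier_vec (dims Y j)"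
      using PY[of "rr n t j + n*b"] y v by (metis mult_mat_vec_carrier)
    show "h j *\<^sub>v unit_vec (Ud n t m j) b = pathmap n Y t (rr n t j + n*b) *\<^sub>v y"
    proof -
      have dr: "dim_row (pathmap n Y t (rr n t j + n*b)) = dims Y j" using PY[of "rr n t j + n*b"] v by simp
      show ?thesis unfolding mat_vec_unit[OF hc b] using d b dr by (intro eq_vecI) (auto simp: h_def)
    qed
  qed
  have hom: "is_hom n h (U n t m :: 'k qrep) Y"
    unfolding is_hom_def
  proof (intro conjI allI impI)
    fix j assume j: "j < n"
    show "h j \<in> carrier_mat (dims Y j) (dims (U n t m :: 'k qrep) j)" using hc by simp
    have nj: "nxt n j < n" using nxt_lt[OF n] .
    have mY: "maps Y j \<in> carrier_mat (dims Y (nxt n j)) (dims Y j)" using Y j unfolding is_rep_def by simp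
    show "h (nxt n j) * maps (U n t m :: 'k qrep) j = maps Y j * h j"
    proof (rule mat_eq_cols[of _ "dims Y (nxt n j)" "Ud n t m j"])
      show "h (nxt n j) * maps (U n t m :: 'k qrep) j \<in> carrier_mat (dims Y (nxt n j)) (Ud n t m j)"
        using hc[of "nxt n j"] by simp
      show "maps Y j * h j \<in> carrier_mat (dims Y (nxt n j)) (Ud n t m j)" using hc[of j] mY by simp
      fix b assume b: "b < Ud n t m j"
      let ?kb = "rr n t j + n*b"
      have kbm: "?kb < m" using b Ud_iff[OF n] by blast
      have vj: "(t + ?kb) mod n = j" using pos_vert[OF n, of t j b] j by simp
      have RHS: "(maps Y j * h j) *\<^sub>v unit_vec (Ud n t m j) b = pathmap n Y t (Suc ?kb) *\<^sub>v y"
      proof -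
        have "(maps Y j * h j) *\<^sub>v unit_vec (Ud n t m j) b = maps Y j *\<^sub>v (h j *\<^sub>v unit_vec (Ud n t m j) b)"
          using mY hc[of j] by simp
        also have "\<dots> = maps Y j *\<^sub>v (pathmap n Y t ?kb *\<^sub>v y)" using hcol[OF j b] by simp
        also have "\<dots> = (maps Y j * pathmap n Y t ?kb) *\<^sub>v y" using mY PY[of ?kb] y vj by simp
        also have "\<dots> = pathmap n Y t (Suc ?kb) *\<^sub>v y" using vj by simp
        finally show ?thesis .
      qed
      have LHS: "(h (nxt n j) * maps (U n t m :: 'k qrep) j) *\<^sub>v unit_vec (Ud n t m j) b
          = h (nxt n j) *\<^sub>v (Um n t m j *\<^sub>v unit_vec (Ud n t m j) b)"
        using hc[of "nxt n j"] by simp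
      show "(h (nxt n j) * maps (U n t m :: 'k qrep) j) *\<^sub>v unit_vec (Ud n t m j) b =
            (maps Y j * h j) *\<^sub>v unit_vec (Ud n t m j) b"
      proof (cases "?kb + 1 < m")
        case True
        have vn: "(t + (?kb + 1)) mod n = nxt n j mod n"
        proof -
          have "(t + (?kb + 1)) mod n = ((t + ?kb) mod n + 1) mod n" by (simp add: mod_simps add.assoc)
          then show ?thesis using vj unfolding nxt_def by simp
        qed
        have dd: "rr n t (nxt n j) + n * ((?kb + 1) div n) = ?kb + 1" using pos_decomp[OF n vn] .
        have bb: "(?kb + 1) div n < Ud n t m (nxt n j)" using Ud_iff[OF n] dd True by simp
        have "h (nxt n j) *\<^sub>v (Um n t m j *\<^sub>v unit_vec (Ud n t m j) b)
            = h (nxt n j) *\<^sub>v unit_vec (Ud n t m (nxt n j)) ((?kb + 1) div n)"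
          using Um_unit[where 'k='k, OF n j b] True by simp
        also have "\<dots> = pathmap n Y t (?kb + 1) *\<^sub>v y" using hcol[OF nj bb] dd by simp
        finally show ?thesis using LHS RHS by simp
      next
        case False
        then have km: "Suc ?kb = m" using kbm by simp
        have "h (nxt n j) *\<^sub>v (Um n t m j *\<^sub>v unit_vec (Ud n t m j) b) = 0\<^sub>v (dims Y (nxt n j))"
          using Um_unit[where 'k='k, OF n j b] False mat_vec_zero[OF hc[of "nxt n j"]] by simp
        moreover have "(t + m) mod n = nxt n j"
        proof -
          have "t + m = (t + ?kb) + 1" using km by simp
          then have "(t + m) mod n = ((t + ?kb) mod n + 1) mod n" by (simp add: mod_simps)
          then show ?thesis using vj unfolding nxt_def by simp
        qed
        ultimately show ?thesis using LHS RHS km py by simp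
      qed
    qed
  qed
  have "h t *\<^sub>v unit_vec (Ud n t m t) 0 = y"
    using hcol[OF t Ud_t_pos[OF n m]] y t by (simp add: rr_self)
  then show ?thesis using hom by blast
qed

lemma hom_U_col:
  assumes n: "0 < n" and t: "t < n" and m: "0 < m" and Y: "is_rep n l Y"
    and h: "is_hom n h (U n t m :: 'k::field qrep) Y" and j: "j < n" and b: "b < Ud n t m j"
  shows "h j *\<^sub>v unit_vec (Ud n t m j) b = pathmap n Y t (rr n t j + n*b) *\<^sub>v (h t *\<^sub>v unit_vec (Ud n t m t) 0)"
proof -
  let ?kb = "rr n t j + n*b"
  have UR: "is_rep n m (U n t m :: 'k qrep)" using U_rep[OF n, of m m] by simp
  have kbm: "?kb < m" using b Ud_iff[OF n] by blast
  have vj: "(t + ?kb) mod n = j" using pos_vert[OF n, of t j b] j by simp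
  have e0: "unit_vec (Ud n t m t) 0 \<in> carrier_vec (dims (U n t m :: 'k qrep) t)" by simp
  have "h ((t + ?kb) mod n) *\<^sub>v (pathmap n (U n t m :: 'k qrep) t ?kb *\<^sub>v unit_vec (Ud n t m t) 0)
      = pathmap n Y t ?kb *\<^sub>v (h t *\<^sub>v unit_vec (Ud n t m t) 0)"
    using hom_pathmap_vec[OF UR Y h t e0] .
  moreover have "pathmap n (U n t m :: 'k qrep) t ?kb *\<^sub>v unit_vec (Ud n t m t) 0 = unit_vec (Ud n t m j) b"
    using PU_e0[where 'k='k, OF n t m, of ?kb] kbm vj pos_div[OF n, of t j b] by simp
  ultimately show ?thesis using vj by simp
qed

lemma hom_U_eq:
  assumes n: "0 < n" and t: "t < n" and m: "0 < m" and Y: "is_rep n l Y"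
    and h: "is_hom n h (U n t m :: 'k::field qrep) Y" and h': "is_hom n h' (U n t m :: 'k::field qrep) Y"
    and e: "h t *\<^sub>v unit_vec (Ud n t m t) 0 = h' t *\<^sub>v unit_vec (Ud n t m t) 0"
    and j: "j < n"
  shows "h j = h' j"
proof (rule mat_eq_cols[of _ "dims Y j" "Ud n t m j"])
  show "h j \<in> carrier_mat (dims Y j) (Ud n t m j)" using is_homD1[OF h j] by simp
  show "h' j \<in> carrier_mat (dims Y j) (Ud n t m j)" using is_homD1[OF h' j] by simp
  fix b assume b: "b < Ud n t m j"
  show "h j *\<^sub>v unit_vec (Ud n t m j) b = h' j *\<^sub>v unit_vec (Ud n t m j) b"
    using hom_U_col[OF n t m Y h j b] hom_U_col[OF n t m Y h' j b] e by simp
qed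

lemma zero_mat_vec: "v \<in> carrier_vec c \<Longrightarrow> (0\<^sub>m r c :: 'a :: field mat) *\<^sub>v v = 0\<^sub>v r"
  by (intro eq_vecI) (auto simp: scalar_prod_def)

lemma rep_path_zero:
  assumes X: "is_rep n l X" and t: "t < n" and x: "x \<in> carrier_vec (dims X t)"
  shows "pathmap n X t (l+1) *\<^sub>v x = 0\<^sub>v (dims X ((t + (l+1)) mod n))"
proof -
  have "pathmap n X t (Suc l) = 0\<^sub>m (dims X ((t + Suc l) mod n)) (dims X t)" using X t unfolding is_rep_def by simp
  then show ?thesis using zero_mat_vec[OF x] by simp
qed

lemma e0_carrier[simp]: "unit_vec (Ud n t m t) 0 \<in> carrier_vec (dims (U n t m) t)" by simp

lemma proj_U:
  assumes n: "0 < n" and t: "t < n"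
  shows "projective n l (U n t (l+1) :: 'k::field qrep)"
  unfolding projective_def
proof (intro conjI allI impI)
  show UR: "is_rep n l (U n t (l+1) :: 'k qrep)" using U_rep[where 'k='k, OF n, of "l+1" l t] by simp
  fix X Y :: "'k qrep" and g f
  assume X: "is_rep n l X" and Y: "is_rep n l Y" and g: "is_epi n g X Y" and f: "is_hom n f (U n t (l+1)) Y"
  let ?e = "unit_vec (Ud n t (l+1) t) 0 :: 'k vec"
  have gh: "is_hom n g X Y" using g unfolding is_epi_def by simp
  have yc: "f t *\<^sub>v ?e \<in> carrier_vec (dims Y t)" using is_homD1[OF f t] by simp
  obtain x where x: "x \<in> carrier_vec (dims X t)" "g t *\<^sub>v x = f t *\<^sub>v ?e"
    using g t yc unfolding is_epi_def by blast
  obtain h where h: "is_hom n h (U n t (l+1) :: 'k qrep) X" "h t *\<^sub>v ?e = x"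
    using hom_from_U[OF n t _ X x(1) rep_path_zero[OF X t x(1)]] by auto
  have gh2: "is_hom n (\<lambda>i. g i * h i) (U n t (l+1) :: 'k qrep) Y" using is_hom_comp[OF UR X Y h(1) gh] .
  have "(g t * h t) *\<^sub>v ?e = f t *\<^sub>v ?e"
    using x h(2) is_homD1[OF gh t] is_homD1[OF h(1) t] by simp
  then have "\<forall>i<n. g i * h i = f i"
    using hom_U_eq[OF n t _ Y gh2 f] by auto
  then show "\<exists>h. is_hom n h (U n t (l+1)) X \<and> (\<forall>i<n. g i * h i = f i)" using h(1) by blast
qed

lemma Ud_mono: "0 < n \<Longrightarrow> m \<le> m' \<Longrightarrow> a < Ud n t m j \<Longrightarrow> a < Ud n t m' j"
  using Ud_iff by (metis order_less_le_trans)

lemma pi_exists: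
  assumes n: "0 < n" and t: "t < n" and m2: "0 < m2" "m2 \<le> l + 1"
  shows "\<exists>p. is_hom n p (U n t (l+1) :: 'k::field qrep) (U n t m2) \<and>
     (\<forall>j<n. \<forall>w \<in> carrier_vec (Ud n t (l+1) j). \<forall>a < Ud n t m2 j. (p j *\<^sub>v w) $ a = w $ a)"
proof -
  have U2: "is_rep n l (U n t m2 :: 'k qrep)" using U_rep[OF n m2(2)] .
  have z: "pathmap n (U n t m2 :: 'k qrep) t (l+1) *\<^sub>v unit_vec (Ud n t m2 t) 0 = 0\<^sub>v (dims (U n t m2 :: 'k qrep) ((t + (l+1)) mod n))"
    using PU_e0[where 'k='k, OF n t m2(1), of "l+1"] m2(2) by simp
  obtain p where p: "is_hom n p (U n t (l+1) :: 'k qrep) (U n t m2)" "p t *\<^sub>v unit_vec (Ud n t (l+1) t) 0 = unit_vec (Ud n t m2 t) 0"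
    using hom_from_U[OF n t _ U2 _ z] by auto
  have col: "\<And>j b. j < n \<Longrightarrow> b < Ud n t (l+1) j \<Longrightarrow> p j *\<^sub>v unit_vec (Ud n t (l+1) j) b =
      (if b < Ud n t m2 j then unit_vec (Ud n t m2 j) b else 0\<^sub>v (Ud n t m2 j))"
  proof -
    fix j b assume j: "j < n" and b: "b < Ud n t (l+1) j"
    have v: "(t + (rr n t j + n*b)) mod n = j" using pos_vert[OF n, of t j b] j by simp
    have "p j *\<^sub>v unit_vec (Ud n t (l+1) j) b = pathmap n (U n t m2 :: 'k qrep) t (rr n t j + n*b) *\<^sub>v unit_vec (Ud n t m2 t) 0"
      using hom_U_col[OF n t _ U2 p(1) j b] p(2) by simp
    also have "\<dots> = (if rr n t j + n*b < m2 then unit_vec (Ud n t m2 j) b else 0\<^sub>v (Ud n t m2 j))"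
      using PU_e0[where 'k='k, OF n t m2(1), of "rr n t j + n*b"] v pos_div[OF n, of t j b] by simp
    finally show "p j *\<^sub>v unit_vec (Ud n t (l+1) j) b =
      (if b < Ud n t m2 j then unit_vec (Ud n t m2 j) b else 0\<^sub>v (Ud n t m2 j))"
      using Ud_iff[OF n, of b t m2 j] by simp
  qed
  have "\<forall>j<n. \<forall>w \<in> carrier_vec (Ud n t (l+1) j). \<forall>a < Ud n t m2 j. (p j *\<^sub>v w) $ a = w $ a"
  proof (intro allI impI ballI)
    fix j and w :: "'k vec" and a assume j: "j < n" and w: "w \<in> carrier_vec (Ud n t (l+1) j)" and a: "a < Ud n t m2 j"
    have pc: "p j \<in> carrier_mat (Ud n t m2 j) (Ud n t (l+1) j)" using is_homD1[OF p(1) j] by simp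
    have aP: "a < Ud n t (l+1) j" using Ud_mono[OF n m2(2) a] .
    have "(p j *\<^sub>v w) $ a = row (p j) a \<bullet> w" using pc a by simp
    also have "\<dots> = (\<Sum>b\<in>{0..<Ud n t (l+1) j}. p j $$ (a,b) * w $ b)"
      unfolding scalar_prod_def using w pc a by (intro sum.cong) auto
    also have "\<dots> = (if a \<in> {0..<Ud n t (l+1) j} then w $ a else 0)"
    proof (rule sum_single)
      fix b assume b: "b \<in> {0..<Ud n t (l+1) j}"
      have "p j $$ (a,b) = col (p j) b $ a" using pc a b by simp
      also have "\<dots> = (p j *\<^sub>v unit_vec (Ud n t (l+1) j) b) $ a" using mat_vec_unit[OF pc, of b] b by simp
      also have "\<dots> = (if b = a then 1 else 0)" using col[OF j, of b] b a by auto
      finally show "p j $$ (a,b) * w $ b = (if b = a then w $ a else 0)" by simp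
    qed simp
    finally show "(p j *\<^sub>v w) $ a = w $ a" using aP by simp
  qed
  then show ?thesis using p(1) by blast
qed

lemma vert_rel:
  assumes n: "0 < n" and t1: "t1 < n"
  shows "(t2 + (rr n t2 t1 + n*q)) mod n = t1"
  using pos_vert[OF n, of t2 t1 q] t1 by simp

lemma nonfactor:
  assumes n: "0 < n" and t1: "t1 < n" and t2: "t2 < n" and m1: "0 < m1" "m1 \<le> l + 1"
    and m2: "0 < m2" "m2 \<le> l + 1"
    and h: "is_hom n h (U n t1 m1 :: 'k::field qrep) (U n t2 m2)"
    and fp: "factors_proj n l h (U n t1 m1) (U n t2 m2)"
    and q: "q < Ud n t2 m2 t1"
    and short: "rr n t2 t1 + n*q + m1 < l + 1"
  shows "(h t1 *\<^sub>v unit_vec (Ud n t1 m1 t1) 0) $ q = 0"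
proof -
  let ?U1 = "U n t1 m1 :: 'k qrep" and ?U2 = "U n t2 m2 :: 'k qrep" and ?UP = "U n t2 (l+1) :: 'k qrep"
  let ?e = "unit_vec (Ud n t1 m1 t1) 0 :: 'k vec"
  have R1: "is_rep n l ?U1" using U_rep[OF n m1(2)] .
  have R2: "is_rep n l ?U2" using U_rep[OF n m2(2)] .
  have RP: "is_rep n l ?UP" using U_rep[where 'k='k, OF n, of "l+1" l t2] by simp
  obtain P g b where P: "projective n l P" "is_hom n g ?U1 P" "is_hom n b P ?U2" "\<forall>i<n. h i = b i * g i"
    using fp unfolding factors_proj_def by blast
  have RPP: "is_rep n l P" using P(1) unfolding projective_def by simp
  obtain p where p: "is_hom n p ?UP ?U2"
     "\<forall>j<n. \<forall>w \<in> carrier_vec (Ud n t2 (l+1) j). \<forall>a < Ud n t2 m2 j. (p j *\<^sub>v w) $ a = w $ a"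
    using pi_exists[where 'k='k, OF n t2 m2] by blast
  have epi: "is_epi n p ?UP ?U2"
    unfolding is_epi_def
  proof (intro conjI allI impI ballI)
    show "is_hom n p ?UP ?U2" using p(1) .
    fix j and y :: "'k vec" assume j: "j < n" and y: "y \<in> carrier_vec (dims ?U2 j)"
    define w where "w = vec (Ud n t2 (l+1) j) (\<lambda>c. if c < Ud n t2 m2 j then y $ c else 0)"
    have w: "w \<in> carrier_vec (dims ?UP j)" unfolding w_def by simp
    have "p j *\<^sub>v w = y"
    proof (rule eq_vecI)
      show "dim_vec (p j *\<^sub>v w) = dim_vec y" using is_homD1[OF p(1) j] y by simp
      fix a assume "a < dim_vec y"
      then have a: "a < Ud n t2 m2 j" using y by simp
      have aP: "a < Ud n t2 (l+1) j" using Ud_mono[OF n m2(2) a] .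
      show "(p j *\<^sub>v w) $ a = y $ a" using p(2) j w a aP unfolding w_def by simp
    qed
    then show "\<exists>x\<in>carrier_vec (dims ?UP j). p j *\<^sub>v x = y" using w by blast
  qed
  obtain b' where b': "is_hom n b' P ?UP" "\<forall>i<n. p i * b' i = b i"
    using P(1) RP R2 epi P(3) unfolding projective_def by blast
  have gam: "is_hom n (\<lambda>i. b' i * g i) ?U1 ?UP" using is_hom_comp[OF R1 RPP RP P(2) b'(1)] .
  define z where "z = (b' t1 * g t1) *\<^sub>v ?e"
  have zc: "z \<in> carrier_vec (Ud n t2 (l+1) t1)" unfolding z_def using is_homD1[OF gam t1] by simp
  have hz: "h t1 *\<^sub>v ?e = p t1 *\<^sub>v z"
  proof -
    note cc = is_homD1[OF P(2) t1] is_homD1[OF P(3) t1] is_homD1[OF b'(1) t1] is_homD1[OF p(1) t1]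
    have "h t1 = (p t1 * b' t1) * g t1" using P(4) b'(2) t1 by simp
    then show ?thesis unfolding z_def using cc by simp
  qed
  have pz: "pathmap n ?UP t1 m1 *\<^sub>v z = 0\<^sub>v (Ud n t2 (l+1) ((t1 + m1) mod n))"
  proof -
    have "pathmap n ?UP t1 m1 *\<^sub>v z = (b' ((t1+m1) mod n) * g ((t1+m1) mod n)) *\<^sub>v (pathmap n ?U1 t1 m1 *\<^sub>v ?e)"
      unfolding z_def using hom_pathmap_vec[OF R1 RP gam t1, of ?e m1] by simp
    also have "pathmap n ?U1 t1 m1 *\<^sub>v ?e = 0\<^sub>v (Ud n t1 m1 ((t1+m1) mod n))"
      using PU_e0[where 'k='k, OF n t1 m1(1), of m1] by simp
    also have "(b' ((t1+m1) mod n) * g ((t1+m1) mod n)) *\<^sub>v 0\<^sub>v (Ud n t1 m1 ((t1+m1) mod n)) = 0\<^sub>v (Ud n t2 (l+1) ((t1 + m1) mod n))"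
      using mat_vec_zero[OF is_homD1[OF gam, of "(t1+m1) mod n"]] n by simp
    finally show ?thesis .
  qed
  let ?kq = "rr n t2 t1 + n*q"
  let ?J = "(t1 + m1) mod n"
  have v: "(t2 + (?kq + m1)) mod n = ?J mod n"
  proof -
    have "(t2 + (?kq + m1)) mod n = ((t2 + ?kq) mod n + m1) mod n" by (simp add: mod_simps add.assoc)
    then show ?thesis using vert_rel[OF n t1, of t2 q] by simp
  qed
  have d: "rr n t2 ?J + n * ((?kq + m1) div n) = ?kq + m1" using pos_decomp[OF n v] .
  have aP: "(?kq + m1) div n < Ud n t2 (l+1) ?J" using Ud_iff[OF n] d short by simp
  have "(pathmap n ?UP t1 m1 *\<^sub>v z) $ ((?kq + m1) div n) = z $ q"
    using PU_vec[where 'k='k, OF n t1 zc aP] d pos_div[OF n, of t2 t1 q] by simp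
  then have zq: "z $ q = 0" using pz aP by simp
  have qP: "q < Ud n t2 (l+1) t1" using Ud_mono[OF n m2(2) q] .
  show ?thesis using hz p(2) t1 zc q zq by simp
qed

lemma factor:
  assumes n: "0 < n" and t1: "t1 < n" and t2: "t2 < n" and m1: "0 < m1" "m1 \<le> l + 1"
    and m2: "0 < m2" "m2 \<le> l + 1"
    and h: "is_hom n h (U n t1 m1 :: 'k::field qrep) (U n t2 m2)"
    and cond: "\<forall>q < Ud n t2 m2 t1. (h t1 *\<^sub>v unit_vec (Ud n t1 m1 t1) 0) $ q \<noteq> 0 \<longrightarrow> l + 1 \<le> rr n t2 t1 + n*q + m1"
  shows "factors_proj n l h (U n t1 m1) (U n t2 m2)"
proof -
  let ?U1 = "U n t1 m1 :: 'k qrep" and ?U2 = "U n t2 m2 :: 'k qrep" and ?UP = "U n t2 (l+1) :: 'k qrep"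
  let ?e = "unit_vec (Ud n t1 m1 t1) 0 :: 'k vec"
  have R1: "is_rep n l ?U1" using U_rep[OF n m1(2)] .
  have R2: "is_rep n l ?U2" using U_rep[OF n m2(2)] .
  have RP: "is_rep n l ?UP" using U_rep[where 'k='k, OF n, of "l+1" l t2] by simp
  define y where "y = h t1 *\<^sub>v ?e"
  have yc: "y \<in> carrier_vec (Ud n t2 m2 t1)" unfolding y_def using is_homD1[OF h t1] by simp
  define z where "z = vec (Ud n t2 (l+1) t1) (\<lambda>c. if c < Ud n t2 m2 t1 then y $ c else (0::'k))"
  have zc: "z \<in> carrier_vec (dims ?UP t1)" unfolding z_def by simp
  let ?J = "(t1 + m1) mod n"
  have pz: "pathmap n ?UP t1 m1 *\<^sub>v z = 0\<^sub>v (dims ?UP ?J)"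
  proof (rule eq_vecI)
    show "dim_vec (pathmap n ?UP t1 m1 *\<^sub>v z) = dim_vec (0\<^sub>v (dims ?UP ?J) :: 'k vec)"
    proof -
      have "pathmap n ?UP t1 m1 \<in> carrier_mat (Ud n t2 (l+1) ?J) (Ud n t2 (l+1) t1)" by (rule PU_carrier[OF n t1])
      then show ?thesis by simp
    qed
    fix a assume "a < dim_vec (0\<^sub>v (dims ?UP ?J) :: 'k vec)"
    then have a: "a < Ud n t2 (l+1) ?J" by simp
    let ?k = "rr n t2 ?J + n*a"
    have km: "?k < l + 1" using a Ud_iff[OF n] by blast
    have "(pathmap n ?UP t1 m1 *\<^sub>v z) $ a = (if m1 \<le> ?k then z $ ((?k - m1) div n) else 0)"
      using PU_vec[where 'k='k, OF n t1 _ a] zc by simp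
    also have "\<dots> = 0"
    proof (cases "m1 \<le> ?k")
      case True
      note mk = True
      define bq where "bq = (?k - m1) div n"
      have v1: "(t2 + ?k) mod n = ?J" using pos_vert[OF n, of t2 ?J a] by simp
      have "((t2 + (?k - m1)) + m1) mod n = (t1 + m1) mod n" using v1 True by simp
      then have v2: "(t2 + (?k - m1)) mod n = t1 mod n" by (rule mod_adds_cancel)
      have bd: "rr n t2 t1 + n * bq = ?k - m1" unfolding bq_def using pos_decomp[OF n v2] .
      have bP: "bq < Ud n t2 (l+1) t1" using Ud_iff[OF n] bd km by simp
      have "z $ bq = 0"
      proof (cases "bq < Ud n t2 m2 t1")
        case True
        have "y $ bq = 0"
        proof (rule ccontr)
          assume "y $ bq \<noteq> 0"
          then have "l + 1 \<le> rr n t2 t1 + n*bq + m1" using cond True unfolding y_def by blast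
          then show False using bd km mk by linarith
        qed
        then show ?thesis unfolding z_def using bP by simp
      next
        case False
        then show ?thesis unfolding z_def using bP by simp
      qed
      then show ?thesis using True unfolding bq_def by simp
    qed simp
    finally show "(pathmap n ?UP t1 m1 *\<^sub>v z) $ a = 0\<^sub>v (dims ?UP ?J) $ a" using a by simp
  qed
  obtain g where g: "is_hom n g ?U1 ?UP" "g t1 *\<^sub>v ?e = z"
    using hom_from_U[OF n t1 m1(1) RP zc pz] by blast
  obtain p where p: "is_hom n p ?UP ?U2"
     "\<forall>j<n. \<forall>w \<in> carrier_vec (Ud n t2 (l+1) j). \<forall>a < Ud n t2 m2 j. (p j *\<^sub>v w) $ a = w $ a"
    using pi_exists[where 'k='k, OF n t2 m2] by blast
  have pg: "is_hom n (\<lambda>i. p i * g i) ?U1 ?U2" using is_hom_comp[OF R1 RP R2 g(1) p(1)] .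
  have "(p t1 * g t1) *\<^sub>v ?e = y"
  proof -
    have "(p t1 * g t1) *\<^sub>v ?e = p t1 *\<^sub>v z" using g(2) is_homD1[OF g(1) t1] is_homD1[OF p(1) t1] by simp
    also have "\<dots> = y"
    proof (rule eq_vecI)
      show "dim_vec (p t1 *\<^sub>v z) = dim_vec y" using is_homD1[OF p(1) t1] yc by simp
      fix a assume "a < dim_vec y"
      then have a: "a < Ud n t2 m2 t1" using yc by simp
      have aP: "a < Ud n t2 (l+1) t1" using Ud_mono[OF n m2(2) a] .
      show "(p t1 *\<^sub>v z) $ a = y $ a" using p(2) t1 zc a aP unfolding z_def by simp
    qed
    finally show ?thesis .
  qed
  then have "\<forall>j<n. p j * g j = h j"
    using hom_U_eq[OF n t1 m1(1) R2 pg h] unfolding y_def by auto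
  then show ?thesis unfolding factors_proj_def using proj_U[where 'k='k, OF n t2, of l] g(1) p(1) by metis
qed

lemma U_noniso:
  assumes n: "0 < n" and t1: "t1 < n" and t2: "t2 < n" and ne: "t1 \<noteq> t2" and m: "0 < m"
  shows "\<not> iso n (U n t1 m :: 'k::field qrep) (U n t2 m)"
proof
  assume "iso n (U n t1 m :: 'k::field qrep) (U n t2 m)"
  then obtain f g where fg: "is_hom n f (U n t1 m :: 'k qrep) (U n t2 m)" "is_hom n g (U n t2 m :: 'k qrep) (U n t1 m)"
    "\<forall>i<n. g i * f i = 1\<^sub>m (Ud n t1 m i) \<and> f i * g i = 1\<^sub>m (Ud n t2 m i)"
    unfolding iso_def by auto
  let ?U1 = "U n t1 m :: 'k qrep" and ?U2 = "U n t2 m :: 'k qrep"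
  let ?e = "unit_vec (Ud n t1 m t1) 0 :: 'k vec"
  obtain s0 where ms: "m = Suc s0" using m by (cases m) auto
  let ?s = "s0"
  let ?J = "(t1 + ?s) mod n"
  have J: "?J < n" using n by simp
  have R1: "is_rep n m ?U1" using U_rep[OF n, of m m] by simp
  have R2: "is_rep n m ?U2" using U_rep[OF n, of m m] by simp
  have sm: "?s < m" using ms by simp
  have v: "(t1 + ?s) mod n = ?J mod n" by simp
  have d: "rr n t1 ?J + n * (?s div n) = ?s" using pos_decomp[OF n v] .
  have idx: "?s div n < Ud n t1 m ?J" using Ud_iff[OF n] d sm by simp
  define p where "p = pathmap n ?U2 t1 ?s *\<^sub>v (f t1 *\<^sub>v ?e)"
  have p1: "p = f ?J *\<^sub>v unit_vec (Ud n t1 m ?J) (?s div n)"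
  proof -
    have "f ?J *\<^sub>v (pathmap n ?U1 t1 ?s *\<^sub>v ?e) = p"
      unfolding p_def using hom_pathmap_vec[OF R1 R2 fg(1) t1, of ?e ?s] by simp
    moreover have "pathmap n ?U1 t1 ?s *\<^sub>v ?e = unit_vec (Ud n t1 m ?J) (?s div n)"
      using PU_e0[where 'k='k, OF n t1 m, of ?s] sm by simp
    ultimately show ?thesis by simp
  qed
  have "g ?J *\<^sub>v p = unit_vec (Ud n t1 m ?J) (?s div n)"
  proof -
    have "g ?J *\<^sub>v p = (g ?J * f ?J) *\<^sub>v unit_vec (Ud n t1 m ?J) (?s div n)"
      unfolding p1 using assoc_mult_mat_vec[OF is_homD1[OF fg(2) J] is_homD1[OF fg(1) J], of "unit_vec (Ud n t1 m ?J) (?s div n)"]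
      by simp
    also have "\<dots> = unit_vec (Ud n t1 m ?J) (?s div n)" using fg(3) J by simp
    finally show ?thesis .
  qed
  moreover have "p = 0\<^sub>v (Ud n t2 m ?J)"
  proof (rule eq_vecI)
    have fe: "f t1 *\<^sub>v ?e \<in> carrier_vec (Ud n t2 m t1)" using is_homD1[OF fg(1) t1] by simp
    show "dim_vec p = dim_vec (0\<^sub>v (Ud n t2 m ?J) :: 'k vec)"
    proof -
      have "pathmap n ?U2 t1 ?s \<in> carrier_mat (Ud n t2 m ?J) (Ud n t2 m t1)" by (rule PU_carrier[OF n t1])
      then show ?thesis unfolding p_def by simp
    qed
    fix a assume "a < dim_vec (0\<^sub>v (Ud n t2 m ?J) :: 'k vec)"
    then have a: "a < Ud n t2 m ?J" by simp
    let ?k = "rr n t2 ?J + n*a"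
    have km: "?k < m" using a Ud_iff[OF n] by blast
    have "\<not> ?s \<le> ?k"
    proof
      assume "?s \<le> ?k"
      then have ks: "?k = ?s" using km ms by linarith
      have "(t2 + ?k) mod n = ?J" using pos_vert[OF n, of t2 ?J a] by simp
      then have "(t2 + ?s) mod n = (t1 + ?s) mod n" using ks by simp
      then have "t2 mod n = t1 mod n" by (rule mod_adds_cancel)
      then show False using t1 t2 ne by simp
    qed
    then show "p $ a = 0\<^sub>v (Ud n t2 m ?J) $ a"
      unfolding p_def using PU_vec[where 'k='k, OF n t1 fe a] a by simp
  qed
  moreover have "g ?J *\<^sub>v 0\<^sub>v (Ud n t2 m ?J) = 0\<^sub>v (Ud n t1 m ?J)"
    using mat_vec_zero[OF is_homD1[OF fg(2) J]] by simp
  moreover have "unit_vec (Ud n t1 m ?J) (?s div n) \<noteq> (0\<^sub>v (Ud n t1 m ?J) :: 'k vec)"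
    using idx by (metis index_unit_vec(2) index_zero_vec(1) zero_neq_one)
  ultimately show False by simp
qed

fun acoef :: "(nat \<Rightarrow> 'a::field) \<Rightarrow> nat \<Rightarrow> 'a" where
  "acoef B 0 = 1"
| "acoef B (Suc j) = - (\<Sum>s\<in>{..j}. acoef B s * B (Suc j - s))"

lemma acoef_conv:
  assumes "B 0 = 1"
  shows "(\<Sum>j\<in>{..q}. acoef B j * B (q - j)) = (if q = 0 then 1 else 0)"
proof (cases q)
  case 0
  then show ?thesis using assms by simp
next
  case (Suc q')
  have "(\<Sum>j\<in>{..Suc q'}. acoef B j * B (Suc q' - j)) = (\<Sum>j\<in>{..q'}. acoef B j * B (Suc q' - j)) + acoef B (Suc q') * B 0"
    by (simp add: sum.atMost_Suc)
  also have "\<dots> = 0" using assms by simp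
  finally show ?thesis using Suc by simp
qed

lemma lin_vec:
  assumes A: "(A :: 'a::field mat) \<in> carrier_mat r N" and S: "finite S" and vs: "\<And>j. j \<in> S \<Longrightarrow> vs j \<in> carrier_vec N"
  shows "A *\<^sub>v vec N (\<lambda>c. \<Sum>j\<in>S. f j * vs j $ c) = vec r (\<lambda>i. \<Sum>j\<in>S. f j * (A *\<^sub>v vs j) $ i)"
proof (rule eq_vecI)
  fix i assume "i < dim_vec (vec r (\<lambda>i. \<Sum>j\<in>S. f j * (A *\<^sub>v vs j) $ i))"
  then have i: "i < r" by simp
  have "(A *\<^sub>v vec N (\<lambda>c. \<Sum>j\<in>S. f j * vs j $ c)) $ i = (\<Sum>c<N. A $$ (i,c) * (\<Sum>j\<in>S. f j * vs j $ c))"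
    using A i by (simp add: scalar_prod_def atLeast0LessThan)
  also have "\<dots> = (\<Sum>c<N. \<Sum>j\<in>S. A $$ (i,c) * (f j * vs j $ c))" by (simp add: sum_distrib_left)
  also have "\<dots> = (\<Sum>j\<in>S. \<Sum>c<N. A $$ (i,c) * (f j * vs j $ c))" by (rule sum.swap)
  also have "\<dots> = (\<Sum>j\<in>S. f j * (\<Sum>c<N. A $$ (i,c) * vs j $ c))"
    by (simp add: sum_distrib_left mult.left_commute)
  also have "\<dots> = (\<Sum>j\<in>S. f j * (A *\<^sub>v vs j) $ i)"
  proof (rule sum.cong[OF refl])
    fix j assume j: "j \<in> S"
    show "f j * (\<Sum>c<N. A $$ (i,c) * vs j $ c) = f j * (A *\<^sub>v vs j) $ i"
      using A i vs[OF j] by (simp add: scalar_prod_def atLeast0LessThan)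
  qed
  finally show "(A *\<^sub>v vec N (\<lambda>c. \<Sum>j\<in>S. f j * vs j $ c)) $ i = vec r (\<lambda>i. \<Sum>j\<in>S. f j * (A *\<^sub>v vs j) $ i) $ i"
    using i by simp
qed (use A in simp)

lemma lin_sp:
  assumes phi: "(phi :: 'a::field vec) \<in> carrier_vec r" and vs: "\<And>j. j \<in> S \<Longrightarrow> vs j \<in> carrier_vec r"
  shows "phi \<bullet> vec r (\<lambda>i. \<Sum>j\<in>S. f j * vs j $ i) = (\<Sum>j\<in>S. f j * (phi \<bullet> vs j))"
proof -
  have "phi \<bullet> vec r (\<lambda>i. \<Sum>j\<in>S. f j * vs j $ i) = (\<Sum>i<r. phi $ i * (\<Sum>j\<in>S. f j * vs j $ i))"
    using phi by (simp add: scalar_prod_def atLeast0LessThan)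
  also have "\<dots> = (\<Sum>i<r. \<Sum>j\<in>S. phi $ i * (f j * vs j $ i))" by (simp add: sum_distrib_left)
  also have "\<dots> = (\<Sum>j\<in>S. \<Sum>i<r. phi $ i * (f j * vs j $ i))" by (rule sum.swap)
  also have "\<dots> = (\<Sum>j\<in>S. f j * (\<Sum>i<r. phi $ i * vs j $ i))"
    by (simp add: sum_distrib_left mult.left_commute)
  also have "\<dots> = (\<Sum>j\<in>S. f j * (phi \<bullet> vs j))"
  proof (rule sum.cong[OF refl])
    fix j assume j: "j \<in> S"
    have "dim_vec (vs j) = r" using vs[OF j] by simp
    then show "f j * (\<Sum>i<r. phi $ i * vs j $ i) = f j * (phi \<bullet> vs j)"
      by (simp add: scalar_prod_def atLeast0LessThan)
  qed
  finally show ?thesis .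
qed

lemma path_zero_ge:
  assumes M: "is_rep n l M" and z: "\<forall>i<n. pathmap n M i (Suc d) = 0\<^sub>m (dims M ((i + Suc d) mod n)) (dims M i)"
    and i: "i < n" and s: "Suc d \<le> s"
  shows "pathmap n M i s = 0\<^sub>m (dims M ((i + s) mod n)) (dims M i)"
proof -
  have n: "0 < n" using i by simp
  have "pathmap n M ((i + Suc d) mod n) (s - Suc d) * pathmap n M i (Suc d) = pathmap n M i (Suc d + (s - Suc d))"
    using pathmap_add[OF M i] .
  moreover have "Suc d + (s - Suc d) = s" using s by simp
  moreover have "pathmap n M ((i + Suc d) mod n) (s - Suc d) \<in> carrier_mat (dims M (((i + Suc d) mod n + (s - Suc d)) mod n)) (dims M ((i + Suc d) mod n))"
    using pathmap_carrier[OF M] n by simp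
  moreover have "((i + Suc d) mod n + (s - Suc d)) mod n = (i + s) mod n"
  proof -
    have "((i + Suc d) mod n + (s - Suc d)) mod n = ((i + Suc d) + (s - Suc d)) mod n" by (simp add: mod_add_left_eq)
    also have "(i + Suc d) + (s - Suc d) = i + s" using s by simp
    finally show ?thesis .
  qed
  ultimately show ?thesis using z i by simp
qed

lemma sp_zero_any[simp]: "(v :: 'a :: semiring_0 vec) \<bullet> 0\<^sub>v k = 0"
  by (simp add: scalar_prod_def)

lemma structure_thm:
  assumes n: "0 < n" and ind: "indecomposable n l (M :: 'k::field qrep)"
  shows "\<exists>t D. t < n \<and> 0 < D \<and> D \<le> l + 1 \<and> iso n M (U n t D)"
proof -
  have R: "is_rep n l M" using ind unfolding indecomposable_def by simp
  obtain i0 where i0: "i0 < n" "dims M i0 \<noteq> 0" using ind unfolding indecomposable_def is_zero_rep_def by blast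
  define S where "S = {s. s \<le> l \<and> (\<exists>i<n. pathmap n M i s \<noteq> 0\<^sub>m (dims M ((i+s) mod n)) (dims M i))}"
  have "pathmap n M i0 0 \<noteq> 0\<^sub>m (dims M ((i0+0) mod n)) (dims M i0)"
  proof
    assume "pathmap n M i0 0 = 0\<^sub>m (dims M ((i0+0) mod n)) (dims M i0)"
    then have "(1\<^sub>m (dims M i0) :: 'k mat) $$ (0,0) = (0\<^sub>m (dims M i0) (dims M i0) :: 'k mat) $$ (0,0)"
      using i0 by simp
    then show False using i0 by simp
  qed
  then have S0: "0 \<in> S" unfolding S_def using i0 by blast
  have Sfin: "finite S" unfolding S_def by (rule finite_subset[of _ "{..l}"]) auto
  define d where "d = Max S"
  have dS: "d \<in> S" unfolding d_def using Max_in[OF Sfin] S0 by blast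
  have dl: "d \<le> l" using dS unfolding S_def by simp
  have zero: "\<forall>i<n. pathmap n M i (Suc d) = 0\<^sub>m (dims M ((i + Suc d) mod n)) (dims M i)"
  proof (cases "Suc d \<le> l")
    case True
    have "Suc d \<notin> S" using Max_ge[OF Sfin] unfolding d_def by fastforce
    then show ?thesis using True unfolding S_def by blast
  next
    case False
    then have "d = l" using dl by simp
    then show ?thesis using R unfolding is_rep_def by simp
  qed
  have zero_vec: "\<And>i s v. i < n \<Longrightarrow> Suc d \<le> s \<Longrightarrow> v \<in> carrier_vec (dims M i) \<Longrightarrow>
      pathmap n M i s *\<^sub>v v = 0\<^sub>v (dims M ((i + s) mod n))"
    using path_zero_ge[OF R zero] zero_mat_vec by metis
  obtain t where t: "t < n" "pathmap n M t d \<noteq> 0\<^sub>m (dims M ((t+d) mod n)) (dims M t)"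
    using dS unfolding S_def by blast
  let ?T = "(t + d) mod n"
  have PC: "\<And>s. pathmap n M t s \<in> carrier_mat (dims M ((t+s) mod n)) (dims M t)" using pathmap_carrier[OF R t(1)] .
  obtain b where b: "b < dims M t" "pathmap n M t d *\<^sub>v unit_vec (dims M t) b \<noteq> 0\<^sub>v (dims M ?T)"
    using mat_zero_cols[OF PC[of d]] t(2) by blast
  define x where "x = (unit_vec (dims M t) b :: 'k vec)"
  have xc: "x \<in> carrier_vec (dims M t)" unfolding x_def by simp
  define w where "w = pathmap n M t d *\<^sub>v x"
  have wc: "w \<in> carrier_vec (dims M ?T)" unfolding w_def using PC[of d] xc by simp
  have wnz: "w \<noteq> 0\<^sub>v (dims M ?T)" unfolding w_def x_def using b(2) .
  obtain c where c: "c < dims M ?T" "w $ c \<noteq> 0"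
  proof -
    have "\<exists>c < dims M ?T. w $ c \<noteq> 0"
    proof (rule ccontr)
      assume "\<not> (\<exists>c < dims M ?T. w $ c \<noteq> 0)"
      then have "w = 0\<^sub>v (dims M ?T)" using wc by (intro eq_vecI) auto
      then show False using wnz by simp
    qed
    then show ?thesis using that by blast
  qed
  define phi where "phi = (1 / w $ c) \<cdot>\<^sub>v unit_vec (dims M ?T) c"
  have phic: "phi \<in> carrier_vec (dims M ?T)" unfolding phi_def by simp
  have phiw: "phi \<bullet> w = 1"
    unfolding phi_def using wc c by (simp add: scalar_prod_left_unit)
  define B where "B = (\<lambda>q. phi \<bullet> (pathmap n M t (d - q*n) *\<^sub>v x))"
  have B0: "B 0 = 1" unfolding B_def using phiw w_def by simp
  define a where "a = acoef B"
  define J where "J = d div n"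
  define vs where "vs = (\<lambda>j. pathmap n M t (j*n) *\<^sub>v x)"
  have vtj: "\<And>j s. (t + (j*n + s)) mod n = (t + s) mod n"
  proof -
    fix j s
    have e: "t + (j*n + s) = (t + s) + j*n" by simp
    show "(t + (j*n + s)) mod n = (t + s) mod n" by (subst e) (rule mod_mult_self1)
  qed
  have vsc: "\<And>j. vs j \<in> carrier_vec (dims M t)"
  proof -
    fix j
    have "(t + j*n) mod n = t" using t(1) by simp
    then show "vs j \<in> carrier_vec (dims M t)" unfolding vs_def using PC[of "j*n"] xc by (metis mult_mat_vec_carrier)
  qed
  define x' where "x' = vec (dims M t) (\<lambda>c. \<Sum>j\<in>{..J}. a j * vs j $ c)"
  have x'c: "x' \<in> carrier_vec (dims M t)" unfolding x'_def by simp
  have Px: "\<And>s. pathmap n M t s *\<^sub>v x' = vec (dims M ((t+s) mod n)) (\<lambda>i. \<Sum>j\<in>{..J}. a j * (pathmap n M t (j*n + s) *\<^sub>v x) $ i)"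
  proof -
    fix s
    have "pathmap n M t s *\<^sub>v x' = vec (dims M ((t+s) mod n)) (\<lambda>i. \<Sum>j\<in>{..J}. a j * (pathmap n M t s *\<^sub>v vs j) $ i)"
      unfolding x'_def using lin_vec[where A="pathmap n M t s" and S="{..J}" and vs=vs and f=a, OF PC[of s]] vsc by simp
    also have "\<dots> = vec (dims M ((t+s) mod n)) (\<lambda>i. \<Sum>j\<in>{..J}. a j * (pathmap n M t (j*n + s) *\<^sub>v x) $ i)"
    proof -
      have "\<And>j. pathmap n M t s *\<^sub>v vs j = pathmap n M t (j*n + s) *\<^sub>v x"
      proof -
        fix j
        have tt: "(t + j*n) mod n = t" using t(1) by simp
        have "pathmap n M ((t + j*n) mod n) s * pathmap n M t (j*n) = pathmap n M t (j*n + s)"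
          using pathmap_add[OF R t(1)] .
        then have "pathmap n M t s * pathmap n M t (j*n) = pathmap n M t (j*n + s)" using tt by simp
        moreover have "pathmap n M t s *\<^sub>v vs j = (pathmap n M t s * pathmap n M t (j*n)) *\<^sub>v x"
          unfolding vs_def using PC[of s] PC[of "j*n"] xc tt by (metis assoc_mult_mat_vec)
        ultimately show "pathmap n M t s *\<^sub>v vs j = pathmap n M t (j*n + s) *\<^sub>v x" by simp
      qed
      then show ?thesis by simp
    qed
    finally show "pathmap n M t s *\<^sub>v x' = vec (dims M ((t+s) mod n)) (\<lambda>i. \<Sum>j\<in>{..J}. a j * (pathmap n M t (j*n + s) *\<^sub>v x) $ i)" .
  qed
  have F2: "\<And>q. q*n \<le> d \<Longrightarrow> phi \<bullet> (pathmap n M t (d - q*n) *\<^sub>v x') = (if q = 0 then 1 else 0)"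
  proof -
    fix q assume q: "q*n \<le> d"
    have qJ: "q \<le> J" unfolding J_def using q n by (simp add: less_eq_div_iff_mult_less_eq)
    have vT: "(t + (d - q*n)) mod n = ?T"
    proof -
      have "(t + (d - q*n)) mod n = (t + (d - q*n) + q*n) mod n" by simp
      also have "t + (d - q*n) + q*n = t + d" using q by simp
      finally show ?thesis .
    qed
    have cs: "\<And>j. pathmap n M t (j*n + (d - q*n)) *\<^sub>v x \<in> carrier_vec (dims M ?T)"
    proof -
      fix j
      have "(t + (j*n + (d - q*n))) mod n = ?T" using vtj[of j "d - q*n"] vT by simp
      then show "pathmap n M t (j*n + (d - q*n)) *\<^sub>v x \<in> carrier_vec (dims M ?T)"
        using PC[of "j*n + (d - q*n)"] xc by (metis mult_mat_vec_carrier)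
    qed
    have "phi \<bullet> (pathmap n M t (d - q*n) *\<^sub>v x') = (\<Sum>j\<in>{..J}. a j * (phi \<bullet> (pathmap n M t (j*n + (d - q*n)) *\<^sub>v x)))"
      unfolding Px using vT lin_sp[OF phic cs] by simp
    also have "\<dots> = (\<Sum>j\<in>{..q}. a j * (phi \<bullet> (pathmap n M t (j*n + (d - q*n)) *\<^sub>v x)))"
    proof (rule sum.mono_neutral_right)
      show "finite {..J}" by simp
      show "{..q} \<subseteq> {..J}" using qJ by auto
      show "\<forall>j\<in>{..J} - {..q}. a j * (phi \<bullet> (pathmap n M t (j*n + (d - q*n)) *\<^sub>v x)) = 0"
      proof
        fix j assume j: "j \<in> {..J} - {..q}"
        then have "q < j" by simp
        then have "q*n + n \<le> j*n" using n by (metis add.commute mult_Suc mult_le_mono1 Suc_leI)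
        then have "Suc d \<le> j*n + (d - q*n)" using q n by linarith
        then have "pathmap n M t (j*n + (d - q*n)) *\<^sub>v x = 0\<^sub>v (dims M ((t + (j*n + (d - q*n))) mod n))"
          using zero_vec[OF t(1) _ xc] by blast
        then show "a j * (phi \<bullet> (pathmap n M t (j*n + (d - q*n)) *\<^sub>v x)) = 0"
          using phic vtj[of j "d - q*n"] vT by simp
      qed
    qed
    also have "\<dots> = (\<Sum>j\<in>{..q}. a j * B (q - j))"
    proof (rule sum.cong[OF refl])
      fix j assume j: "j \<in> {..q}"
      then have "j*n + (d - q*n) = d - (q - j)*n" using q by (simp add: diff_mult_distrib)
      then show "a j * (phi \<bullet> (pathmap n M t (j*n + (d - q*n)) *\<^sub>v x)) = a j * B (q - j)"
        unfolding B_def by simp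
    qed
    also have "\<dots> = (if q = 0 then 1 else 0)" unfolding a_def using acoef_conv[of B q, OF B0] .
    finally show "phi \<bullet> (pathmap n M t (d - q*n) *\<^sub>v x') = (if q = 0 then 1 else 0)" .
  qed
  have x'nz: "x' \<noteq> 0\<^sub>v (dims M t)"
  proof
    assume z: "x' = 0\<^sub>v (dims M t)"
    have "phi \<bullet> (pathmap n M t (d - 0*n) *\<^sub>v x') = 1" using F2[of 0] by simp
    moreover have "pathmap n M t (d - 0*n) *\<^sub>v x' = 0\<^sub>v (dims M ?T)" using z mat_vec_zero[OF PC[of d]] by simp
    ultimately show False using phic by simp
  qed
  define D where "D = Suc d"
  have D: "0 < D" "D \<le> l + 1" unfolding D_def using dl by auto
  have pzx: "pathmap n M t D *\<^sub>v x' = 0\<^sub>v (dims M ((t + D) mod n))"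
    unfolding D_def by (rule zero_vec[OF t(1) order.refl x'c])
  obtain g where g: "is_hom n g (U n t D :: 'k qrep) M" "g t *\<^sub>v unit_vec (Ud n t D t) 0 = x'"
    using hom_from_U[OF n t(1) D(1) R x'c pzx] by blast
  have UR: "is_rep n l (U n t D :: 'k qrep)" using U_rep[OF n D(2)] .
  define r where "r = (\<lambda>j. mat (Ud n t D j) (dims M j) (\<lambda>(a,c). phi \<bullet> col (pathmap n M j (d - (rr n t j + n*a))) c))"
  have rc: "\<And>j. r j \<in> carrier_mat (Ud n t D j) (dims M j)" unfolding r_def by simp
  have kad: "\<And>j a. a < Ud n t D j \<Longrightarrow> rr n t j + n*a \<le> d" using Ud_iff[OF n] unfolding D_def by (metis less_Suc_eq_le)
  have vr: "\<And>j a. j < n \<Longrightarrow> a < Ud n t D j \<Longrightarrow> (j + (d - (rr n t j + n*a))) mod n = ?T"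
  proof -
    fix j a assume j: "j < n" and a: "a < Ud n t D j"
    have v: "(t + (rr n t j + n*a)) mod n = j" using pos_vert[OF n, of t j a] j by simp
    have "(j + (d - (rr n t j + n*a))) mod n = ((t + (rr n t j + n*a)) mod n + (d - (rr n t j + n*a))) mod n"
      using v by simp
    also have "\<dots> = ((t + (rr n t j + n*a)) + (d - (rr n t j + n*a))) mod n" by (simp add: mod_add_left_eq)
    also have "(t + (rr n t j + n*a)) + (d - (rr n t j + n*a)) = t + d" using kad[OF a] by simp
    finally show "(j + (d - (rr n t j + n*a))) mod n = ?T" .
  qed
  have rowr: "\<And>j (v :: 'k vec) a. j < n \<Longrightarrow> v \<in> carrier_vec (dims M j) \<Longrightarrow> a < Ud n t D j \<Longrightarrow>
      (r j *\<^sub>v v) $ a = phi \<bullet> (pathmap n M j (d - (rr n t j + n*a)) *\<^sub>v v)"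
  proof -
    fix j and v :: "'k vec" and a assume j: "j < n" and v: "v \<in> carrier_vec (dims M j)" and a: "a < Ud n t D j"
    let ?P = "pathmap n M j (d - (rr n t j + n*a))"
    have Pc: "?P \<in> carrier_mat (dims M ?T) (dims M j)" using pathmap_carrier[OF R j, of "d - (rr n t j + n*a)"] vr[OF j a] by simp
    have "(r j *\<^sub>v v) $ a = row (r j) a \<bullet> v" using rc[of j] a by simp
    also have "row (r j) a = vec (dims M j) (\<lambda>c. phi \<bullet> col ?P c)" unfolding r_def using a by (intro eq_vecI) auto
    also have "vec (dims M j) (\<lambda>c. phi \<bullet> col ?P c) \<bullet> v = phi \<bullet> vec (dims M ?T) (\<lambda>i. row ?P i \<bullet> v)"
      using assoc_scalar_prod[OF phic Pc v] .
    also have "vec (dims M ?T) (\<lambda>i. row ?P i \<bullet> v) = ?P *\<^sub>v v" using Pc unfolding mult_mat_vec_def by simp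
    finally show "(r j *\<^sub>v v) $ a = phi \<bullet> (?P *\<^sub>v v)" .
  qed
  have rhom: "is_hom n r M (U n t D :: 'k qrep)"
    unfolding is_hom_def
  proof (intro conjI allI impI)
    fix j assume j: "j < n"
    show "r j \<in> carrier_mat (dims (U n t D :: 'k qrep) j) (dims M j)" using rc by simp
    have nj: "nxt n j < n" using nxt_lt[OF n] .
    have mj: "maps M j \<in> carrier_mat (dims M (nxt n j)) (dims M j)" using R j unfolding is_rep_def by simp
    show "r (nxt n j) * maps M j = maps (U n t D :: 'k qrep) j * r j"
    proof (rule mat_eq_cols[of _ "Ud n t D (nxt n j)" "dims M j"])
      show "r (nxt n j) * maps M j \<in> carrier_mat (Ud n t D (nxt n j)) (dims M j)" using rc[of "nxt n j"] rc[of j] mj by auto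
      show "maps (U n t D :: 'k qrep) j * r j \<in> carrier_mat (Ud n t D (nxt n j)) (dims M j)" using rc[of j] by auto
      fix b assume b: "b < dims M j"
      let ?v = "unit_vec (dims M j) b :: 'k vec"
      have vc: "?v \<in> carrier_vec (dims M j)" by simp
      have mv: "maps M j *\<^sub>v ?v \<in> carrier_vec (dims M (nxt n j))" using mj by simp
      have zc: "r j *\<^sub>v ?v \<in> carrier_vec (Ud n t D j)" using rc[of j] by simp
      have PU1: "pathmap n (U n t D :: 'k qrep) j 1 = Um n t D j" using j by simp
      show "(r (nxt n j) * maps M j) *\<^sub>v ?v = (maps (U n t D :: 'k qrep) j * r j) *\<^sub>v ?v"
      proof (rule eq_vecI)
        show "dim_vec ((r (nxt n j) * maps M j) *\<^sub>v ?v) = dim_vec ((maps (U n t D :: 'k qrep) j * r j) *\<^sub>v ?v)"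
          using rc[of "nxt n j"] rc[of j] mj by simp
        fix a assume "a < dim_vec ((maps (U n t D :: 'k qrep) j * r j) *\<^sub>v ?v)"
        then have a: "a < Ud n t D (nxt n j)" by simp
        have a1: "a < Ud n t D ((j+1) mod n)" using a unfolding nxt_def by simp
        let ?k = "rr n t (nxt n j) + n*a"
        have kd: "?k \<le> d" using kad[OF a] .
        have "((r (nxt n j) * maps M j) *\<^sub>v ?v) $ a = (r (nxt n j) *\<^sub>v (maps M j *\<^sub>v ?v)) $ a"
          using rc[of "nxt n j"] rc[of j] mj by simp
        also have "\<dots> = phi \<bullet> (pathmap n M (nxt n j) (d - ?k) *\<^sub>v (maps M j *\<^sub>v ?v))"
          using rowr[OF nj mv a] .
        also have "pathmap n M (nxt n j) (d - ?k) *\<^sub>v (maps M j *\<^sub>v ?v) = (pathmap n M (nxt n j) (d - ?k) * maps M j) *\<^sub>v ?v"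
          using pathmap_carrier[OF R nj, of "d - ?k"] mj by simp
        also have "pathmap n M (nxt n j) (d - ?k) * maps M j = pathmap n M j (Suc (d - ?k))"
          using pathmap_prepend[OF R j] unfolding nxt_def by simp
        finally have L: "((r (nxt n j) * maps M j) *\<^sub>v ?v) $ a = phi \<bullet> (pathmap n M j (Suc (d - ?k)) *\<^sub>v ?v)" .
        have "((maps (U n t D :: 'k qrep) j * r j) *\<^sub>v ?v) $ a = (pathmap n (U n t D :: 'k qrep) j 1 *\<^sub>v (r j *\<^sub>v ?v)) $ a"
          using rc[of j] PU1 by simp
        also have "\<dots> = (if 1 \<le> ?k then (r j *\<^sub>v ?v) $ ((?k - 1) div n) else 0)"
          using PU_vec[where 'k='k, OF n j zc a1] unfolding nxt_def by simp
        finally have Rt: "((maps (U n t D :: 'k qrep) j * r j) *\<^sub>v ?v) $ a = (if 1 \<le> ?k then (r j *\<^sub>v ?v) $ ((?k - 1) div n) else 0)" .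
        show "((r (nxt n j) * maps M j) *\<^sub>v ?v) $ a = ((maps (U n t D :: 'k qrep) j * r j) *\<^sub>v ?v) $ a"
        proof (cases "1 \<le> ?k")
          case True
          have v1: "(t + ?k) mod n = (j + 1) mod n" using pos_vert[OF n, of t "nxt n j" a] unfolding nxt_def by simp
          have eqk: "(t + (?k - 1)) + 1 = t + ?k" using True by simp
          have "((t + (?k - 1)) + 1) mod n = (j + 1) mod n" unfolding eqk by (rule v1)
          then have v2: "(t + (?k - 1)) mod n = j mod n" by (rule mod_adds_cancel)
          have a0: "rr n t j + n * ((?k - 1) div n) = ?k - 1" using pos_decomp[OF n v2] .
          have a0U: "(?k - 1) div n < Ud n t D j" using Ud_iff[OF n] a0 kd unfolding D_def by simp
          have "(r j *\<^sub>v ?v) $ ((?k - 1) div n) = phi \<bullet> (pathmap n M j (d - (?k - 1)) *\<^sub>v ?v)"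
            using rowr[OF j vc a0U] a0 by simp
          moreover have "Suc (d - ?k) = d - (?k - 1)" using True kd by simp
          ultimately show ?thesis using L Rt True by simp
        next
          case False
          have le: "Suc d \<le> Suc (d - ?k)" using False by simp
          have "pathmap n M j (Suc (d - ?k)) *\<^sub>v ?v = 0\<^sub>v (dims M ((j + Suc (d - ?k)) mod n))"
            by (rule zero_vec[OF j le vc])
          then show ?thesis using L Rt False phic by simp
        qed
      qed
    qed
  qed
  let ?e = "unit_vec (Ud n t D t) 0 :: 'k vec"
  have rg: "is_hom n (\<lambda>i. r i * g i) (U n t D :: 'k qrep) (U n t D)" using is_hom_comp[OF UR R UR g(1) rhom] .
  have rge: "(r t * g t) *\<^sub>v ?e = 1\<^sub>m (Ud n t D t) *\<^sub>v ?e"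
  proof -
    have "(r t * g t) *\<^sub>v ?e = r t *\<^sub>v x'" using g(2) rc[of t] is_homD1[OF g(1) t(1)] by simp
    also have "\<dots> = ?e"
    proof (rule eq_vecI)
      show "dim_vec (r t *\<^sub>v x') = dim_vec ?e" using rc[of t] by simp
      fix a assume "a < dim_vec ?e"
      then have a: "a < Ud n t D t" by simp
      have "(r t *\<^sub>v x') $ a = phi \<bullet> (pathmap n M t (d - (rr n t t + n*a)) *\<^sub>v x')" using rowr[OF t(1) x'c a] .
      also have "\<dots> = phi \<bullet> (pathmap n M t (d - a*n) *\<^sub>v x')" by (simp add: rr_self mult.commute)
      also have "\<dots> = (if a = 0 then 1 else 0)" using F2[of a] kad[OF a] by (simp add: rr_self mult.commute)
      finally show "(r t *\<^sub>v x') $ a = ?e $ a" using a by simp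
    qed
    finally show ?thesis by simp
  qed
  have rginv: "\<forall>i<n. r i * g i = 1\<^sub>m (Ud n t D i)"
  proof (intro allI impI)
    fix i assume i: "i < n"
    show "r i * g i = 1\<^sub>m (Ud n t D i)"
    proof -
      have idh: "is_hom n (\<lambda>i. 1\<^sub>m (Ud n t D i)) (U n t D :: 'k qrep) (U n t D)" using is_hom_id[OF UR] by simp
      show ?thesis using hom_U_eq[OF n t(1) D(1) UR rg idh rge i] by simp
    qed
  qed
  define e where "e = (\<lambda>i. g i * r i)"
  have eh: "is_hom n e M M" unfolding e_def using is_hom_comp[OF R UR R rhom g(1)] .
  have eidem: "\<forall>i<n. e i * e i = e i"
  proof (intro allI impI)
    fix i assume i: "i < n"
    note cc = rc[of i] is_homD1[OF g(1) i]
    have "e i * e i = g i * (r i * g i) * r i" unfolding e_def using cc by simp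
    then show "e i * e i = e i" unfolding e_def using rginv i cc by simp
  qed
  have ent: "e t \<noteq> 0\<^sub>m (dims M t) (dims M t)"
  proof
    assume z: "e t = 0\<^sub>m (dims M t) (dims M t)"
    have "e t *\<^sub>v x' = g t *\<^sub>v ((r t * g t) *\<^sub>v ?e)"
    proof -
      have "e t *\<^sub>v x' = g t *\<^sub>v (r t *\<^sub>v (g t *\<^sub>v ?e))"
        unfolding e_def using g(2) rc[of t] is_homD1[OF g(1) t(1)] x'c by simp
      also have "\<dots> = g t *\<^sub>v ((r t * g t) *\<^sub>v ?e)" using rc[of t] is_homD1[OF g(1) t(1)] by simp
      finally show ?thesis .
    qed
    also have "\<dots> = x'" using rginv t(1) g(2) by simp
    finally have "e t *\<^sub>v x' = x'" .
    moreover have "e t *\<^sub>v x' = 0\<^sub>v (dims M t)" using z zero_mat_vec[OF x'c] by simp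
    ultimately show False using x'nz by simp
  qed
  have "(\<forall>i<n. e i = 0\<^sub>m (dims M i) (dims M i)) \<or> (\<forall>i<n. e i = 1\<^sub>m (dims M i))"
    using ind eh eidem unfolding indecomposable_def by blast
  then have grinv: "\<forall>i<n. g i * r i = 1\<^sub>m (dims M i)" using ent t(1) unfolding e_def by blast
  have "iso n M (U n t D)"
    unfolding iso_def using rhom g(1) rginv grinv by auto
  then show ?thesis using t(1) D by blast
qed

lemma shift_dims[simp]: "dims (shift_rep n s M) i = dims M ((i+s) mod n)"
  and shift_maps[simp]: "maps (shift_rep n s M) i = maps M ((i+s) mod n)"
  unfolding shift_rep_def by simp_all

lemma nxt_shift: "nxt n ((i+s) mod n) = (nxt n i + s) mod n"
  unfolding nxt_def by (simp add: mod_simps ac_simps)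

lemma shift_pathmap:
  assumes n: "0 < n" and i: "i < n"
  shows "pathmap n (shift_rep n s M) i k = pathmap n M ((i+s) mod n) k"
proof (induction k)
  case 0
  then show ?case by simp
next
  case (Suc k)
  have "((i+k) mod n + s) mod n = ((i+s) mod n + k) mod n" by (simp add: mod_simps ac_simps)
  then show ?case using Suc by simp
qed

lemma shift_is_rep:
  assumes n: "0 < n" and M: "is_rep n l M"
  shows "is_rep n l (shift_rep n s M)"
  unfolding is_rep_def
proof (intro conjI allI impI)
  fix i assume i: "i < n"
  have j: "(i+s) mod n < n" using n by simp
  show "maps (shift_rep n s M) i \<in> carrier_mat (dims (shift_rep n s M) (nxt n i)) (dims (shift_rep n s M) i)"
    using M j unfolding is_rep_def by (simp add: nxt_shift[symmetric])
  have e: "((i+s) mod n + Suc l) mod n = ((i + Suc l) mod n + s) mod n"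
    by (simp only: mod_add_left_eq) (simp add: ac_simps)
  show "pathmap n (shift_rep n s M) i (Suc l) = 0\<^sub>m (dims (shift_rep n s M) ((i + Suc l) mod n)) (dims (shift_rep n s M) i)"
  proof -
    have P: "pathmap n (shift_rep n s M) i (Suc l) = pathmap n M ((i+s) mod n) (Suc l)" by (rule shift_pathmap[OF n i])
    have Z: "pathmap n M ((i+s) mod n) (Suc l) = 0\<^sub>m (dims M (((i+s) mod n + Suc l) mod n)) (dims M ((i+s) mod n))"
      using M j unfolding is_rep_def by blast
    show ?thesis by (simp only: P Z shift_dims e)
  qed
qed

lemma shift_hom:
  assumes n: "0 < n" and f: "is_hom n f A B"
  shows "is_hom n (\<lambda>i. f ((i+s) mod n)) (shift_rep n s A) (shift_rep n s B)"
  unfolding is_hom_def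
proof (intro conjI allI impI)
  fix i assume i: "i < n"
  have j: "(i+s) mod n < n" using n by simp
  show "f ((i+s) mod n) \<in> carrier_mat (dims (shift_rep n s B) i) (dims (shift_rep n s A) i)"
    using is_homD1[OF f j] by simp
  show "f ((nxt n i + s) mod n) * maps (shift_rep n s A) i = maps (shift_rep n s B) i * f ((i+s) mod n)"
    using f j unfolding is_hom_def by (simp add: nxt_shift[symmetric])
qed

lemma shift_iso:
  assumes n: "0 < n" and iso: "iso n A B"
  shows "iso n (shift_rep n s A) (shift_rep n s B)"
proof -
  obtain f g where fg: "is_hom n f A B" "is_hom n g B A"
    "\<forall>i<n. g i * f i = 1\<^sub>m (dims A i) \<and> f i * g i = 1\<^sub>m (dims B i)"
    using iso unfolding iso_def by blast
  have "\<forall>i<n. g ((i+s) mod n) * f ((i+s) mod n) = 1\<^sub>m (dims (shift_rep n s A) i) \<and>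
              f ((i+s) mod n) * g ((i+s) mod n) = 1\<^sub>m (dims (shift_rep n s B) i)"
    using fg(3) n by simp
  then show ?thesis unfolding iso_def using shift_hom[OF n fg(1)] shift_hom[OF n fg(2)] by blast
qed

lemma mod_back:
  fixes n i s s' :: nat
  assumes n: "0 < n" and i: "i < n" and ss: "(s + s') mod n = 0"
  shows "((i + s') mod n + s) mod n = i"
proof -
  obtain k where k: "s + s' = n * k" using ss by (auto simp: mod_eq_0_iff_dvd dvd_def)
  have "((i + s') mod n + s) mod n = ((i + s') + s) mod n" by (simp add: mod_simps)
  also have "(i + s') + s = i + n * k" using k by simp
  also have "(i + n * k) mod n = i" using i by simp
  finally show ?thesis .
qed

lemma shift_hom_back:
  assumes n: "0 < n" and f: "is_hom n f (shift_rep n s A) (shift_rep n s B)" and ss: "(s + s') mod n = 0"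
  shows "is_hom n (\<lambda>i. f ((i+s') mod n)) A B"
  unfolding is_hom_def
proof (intro conjI allI impI)
  fix i assume i: "i < n"
  have j: "(i+s') mod n < n" using n by simp
  have b: "((i + s') mod n + s) mod n = i" using mod_back[OF n i ss] .
  show "f ((i+s') mod n) \<in> carrier_mat (dims B i) (dims A i)"
    using is_homD1[OF f j] b by simp
  have "f (nxt n ((i+s') mod n)) * maps (shift_rep n s A) ((i+s') mod n) = maps (shift_rep n s B) ((i+s') mod n) * f ((i+s') mod n)"
    using f j unfolding is_hom_def by simp
  then show "f ((nxt n i + s') mod n) * maps A i = maps B i * f ((i+s') mod n)"
    using b by (simp add: nxt_shift)
qed

lemma shift_indec:
  assumes n: "0 < n" and M: "indecomposable n l M"
  shows "indecomposable n l (shift_rep n s M)"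
proof -
  have R: "is_rep n l M" using M unfolding indecomposable_def by simp
  define s' where "s' = n - s mod n"
  have ss: "(s + s') mod n = 0"
  proof -
    have e1: "s div n * n + s mod n = s" by (rule div_mult_mod_eq)
    have "s + s' = s div n * n + n" unfolding s'_def using e1 mod_less_divisor[OF n, of s] by linarith
    then show ?thesis by simp
  qed
  obtain i0 where i0: "i0 < n" "dims M i0 \<noteq> 0" using M unfolding indecomposable_def is_zero_rep_def by blast
  have nz: "\<not> is_zero_rep n (shift_rep n s M)"
  proof
    assume z: "is_zero_rep n (shift_rep n s M)"
    have "(i0 + s') mod n < n" using n by simp
    then have "dims M (((i0 + s') mod n + s) mod n) = 0" using z unfolding is_zero_rep_def by simp
    then show False using mod_back[OF n i0(1) ss] i0(2) by simp
  qed
  have "\<forall>e. is_hom n e (shift_rep n s M) (shift_rep n s M) \<longrightarrow> (\<forall>i<n. e i * e i = e i) \<longrightarrow>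
        (\<forall>i<n. e i = 0\<^sub>m (dims (shift_rep n s M) i) (dims (shift_rep n s M) i)) \<or> (\<forall>i<n. e i = 1\<^sub>m (dims (shift_rep n s M) i))"
  proof (intro allI impI)
    fix e assume e: "is_hom n e (shift_rep n s M) (shift_rep n s M)" and idem: "\<forall>i<n. e i * e i = e i"
    have e': "is_hom n (\<lambda>i. e ((i+s') mod n)) M M" using shift_hom_back[OF n e ss] .
    have idem': "\<forall>i<n. e ((i+s') mod n) * e ((i+s') mod n) = e ((i+s') mod n)" using idem n by simp
    have bk: "\<And>i. i < n \<Longrightarrow> e i = e (((i+s) mod n + s') mod n)"
    proof -
      fix i assume i: "i < n"
      have "(s' + s) mod n = 0" using ss by (simp add: add.commute)
      then show "e i = e (((i+s) mod n + s') mod n)" using mod_back[OF n i, of s' s] by simp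
    qed
    from M e' idem' have "(\<forall>i<n. e ((i+s') mod n) = 0\<^sub>m (dims M i) (dims M i)) \<or> (\<forall>i<n. e ((i+s') mod n) = 1\<^sub>m (dims M i))"
      unfolding indecomposable_def by blast
    then show "(\<forall>i<n. e i = 0\<^sub>m (dims (shift_rep n s M) i) (dims (shift_rep n s M) i)) \<or> (\<forall>i<n. e i = 1\<^sub>m (dims (shift_rep n s M) i))"
    proof
      assume z: "\<forall>i<n. e ((i+s') mod n) = 0\<^sub>m (dims M i) (dims M i)"
      have "\<forall>i<n. e i = 0\<^sub>m (dims (shift_rep n s M) i) (dims (shift_rep n s M) i)"
      proof (intro allI impI)
        fix i assume i: "i < n"
        have "(i+s) mod n < n" using n by simp
        then show "e i = 0\<^sub>m (dims (shift_rep n s M) i) (dims (shift_rep n s M) i)" using z bk[OF i] by simp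
      qed
      then show ?thesis by simp
    next
      assume z: "\<forall>i<n. e ((i+s') mod n) = 1\<^sub>m (dims M i)"
      have "\<forall>i<n. e i = 1\<^sub>m (dims (shift_rep n s M) i)"
      proof (intro allI impI)
        fix i assume i: "i < n"
        have "(i+s) mod n < n" using n by simp
        then show "e i = 1\<^sub>m (dims (shift_rep n s M) i)" using z bk[OF i] by simp
      qed
      then show ?thesis by simp
    qed
  qed
  then show ?thesis unfolding indecomposable_def using shift_is_rep[OF n R] nz by blast
qed

definition tau :: "nat \<Rightarrow> nat \<Rightarrow> nat \<Rightarrow> nat" where
  "tau n t s = nat ((int t - int s) mod int n)"

lemma tau_lt: "0 < n \<Longrightarrow> tau n t s < n"
  unfolding tau_def by (simp add: nat_less_iff)

lemma rr_shift:
  assumes n: "0 < n"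
  shows "rr n t ((i+s) mod n) = rr n (tau n t s) i"
proof -
  have nn: "0 \<le> (int t - int s) mod int n" using n by simp
  have "(int ((i+s) mod n) - int t) mod int n = (int i + int s - int t) mod int n"
    by (simp add: zmod_int mod_diff_left_eq)
  also have "\<dots> = (int i - (int t - int s)) mod int n" by (simp add: algebra_simps)
  also have "\<dots> = (int i - (int t - int s) mod int n) mod int n" by (simp add: mod_diff_right_eq)
  also have "\<dots> = (int i - int (tau n t s)) mod int n" unfolding tau_def using nn by simp
  finally show ?thesis unfolding rr_def by simp
qed

lemma U_shift_iso:
  assumes n: "0 < n"
  shows "iso n (shift_rep n s (U n t m :: 'k::field qrep)) (U n (tau n t s) m)"
proof (rule iso_eqI)
  show "is_rep n m (shift_rep n s (U n t m :: 'k qrep))" using shift_is_rep[OF n U_rep[OF n, of m m]] by simp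
  fix i assume i: "i < n"
  show "dims (shift_rep n s (U n t m :: 'k qrep)) i = dims (U n (tau n t s) m :: 'k qrep) i"
    by (simp add: Ud_def rr_shift[OF n])
  have "Ud n t m (nxt n ((i + s) mod n)) = Ud n (tau n t s) m (nxt n i)"
    unfolding nxt_shift Ud_def using rr_shift[OF n] by simp
  moreover have "rr n t (nxt n ((i + s) mod n)) = rr n (tau n t s) (nxt n i)"
    unfolding nxt_shift using rr_shift[OF n] by simp
  moreover have "Ud n t m ((i + s) mod n) = Ud n (tau n t s) m i" unfolding Ud_def using rr_shift[OF n] by simp
  moreover have "rr n t ((i + s) mod n) = rr n (tau n t s) i" using rr_shift[OF n] by simp
  ultimately show "maps (shift_rep n s (U n t m :: 'k qrep)) i = maps (U n (tau n t s) m :: 'k qrep) i"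
    by (simp add: Um_def)
qed

lemma Ud_Suc:
  assumes n: "0 < n" and j: "j < n"
  shows "Ud n t (Suc m) j = Ud n t m j + (if (t + m) mod n = j then 1 else 0)"
proof -
  let ?r = "rr n t j"
  have r: "?r < n" using rr_lt[OF n] .
  define X where "X = m + n - 1 - ?r"
  have X1: "Suc m + n - 1 - ?r = Suc X" unfolding X_def using r by simp
  have "Suc X div n = (if Suc X mod n = 0 then Suc (X div n) else X div n)" by (rule div_Suc)
  moreover have "Suc X mod n = 0 \<longleftrightarrow> (t + m) mod n = j"
  proof -
    have "Suc X = m + (n - ?r)" unfolding X_def using r by simp
    then have "Suc X mod n = 0 \<longleftrightarrow> (m + (n - ?r)) mod n = 0" by simp
    also have "\<dots> \<longleftrightarrow> m mod n = ?r"
    proof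
      assume h: "(m + (n - ?r)) mod n = 0"
      have "(m + (n - ?r) + ?r) mod n = ((m + (n - ?r)) mod n + ?r) mod n" by (simp add: mod_simps)
      also have "\<dots> = ?r" using h r by simp
      also have "m + (n - ?r) + ?r = m + n" using r by simp
      finally show "m mod n = ?r" by simp
    next
      assume h: "m mod n = ?r"
      have "(m + (n - ?r)) mod n = (m mod n + (n - ?r)) mod n" by (simp add: mod_simps)
      also have "\<dots> = 0" using h r by simp
      finally show "(m + (n - ?r)) mod n = 0" .
    qed
    also have "\<dots> \<longleftrightarrow> (t + m) mod n = j mod n" by (rule rr_char[OF n])
    finally show ?thesis using j by simp
  qed
  ultimately show ?thesis unfolding Ud_def X1 X_def[symmetric] by auto
qed

lemma len_U:
  assumes n: "0 < n"
  shows "len n (U n t m :: 'k::field qrep) = m"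
proof (induction m)
  case 0
  have "\<And>j. Ud n t 0 j = 0"
  proof -
    fix j
    have "n - Suc (rr n t j) < n" using n by simp
    then show "Ud n t 0 j = 0" unfolding Ud_def by simp
  qed
  then show ?case unfolding len_def by simp
next
  case (Suc m)
  have "len n (U n t (Suc m) :: 'k qrep) = (\<Sum>j<n. Ud n t m j + (if (t + m) mod n = j then 1 else 0))"
    unfolding len_def using Ud_Suc[OF n] by simp
  also have "\<dots> = (\<Sum>j<n. Ud n t m j) + (\<Sum>j<n. (if (t + m) mod n = j then 1 else 0))"
    by (simp add: sum.distrib)
  also have "(\<Sum>j<n. (if (t + m) mod n = j then 1 else 0)) = (1::nat)"
    using n by (simp add: sum.delta)
  finally show ?case using Suc unfolding len_def by simp
qed

lemma is_hom_lin:
  assumes A: "is_rep n l A" and B: "is_rep n l B" and g: "is_hom n g A B" and f: "is_hom n f A B"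
  shows "is_hom n (\<lambda>i. g i - c \<cdot>\<^sub>m f i) A B"
  unfolding is_hom_def
proof (intro conjI allI impI)
  fix i assume i: "i < n"
  have n: "0 < n" using i by simp
  have j: "nxt n i < n" using nxt_lt[OF n] .
  note cc = is_homD1[OF g i] is_homD1[OF f i] is_homD1[OF g j] is_homD1[OF f j]
  have mA: "maps A i \<in> carrier_mat (dims A (nxt n i)) (dims A i)" using A i unfolding is_rep_def by simp
  have mB: "maps B i \<in> carrier_mat (dims B (nxt n i)) (dims B i)" using B i unfolding is_rep_def by simp
  show "g i - c \<cdot>\<^sub>m f i \<in> carrier_mat (dims B i) (dims A i)" using cc by (intro minus_carrier_mat) simp
  have hg: "g (nxt n i) * maps A i = maps B i * g i" using g i unfolding is_hom_def by simp
  have hf: "f (nxt n i) * maps A i = maps B i * f i" using f i unfolding is_hom_def by simp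
  have "(g (nxt n i) - c \<cdot>\<^sub>m f (nxt n i)) * maps A i = g (nxt n i) * maps A i - (c \<cdot>\<^sub>m f (nxt n i)) * maps A i"
    using minus_mult_distrib_mat[OF cc(3) smult_carrier_mat[OF cc(4)] mA] .
  also have "(c \<cdot>\<^sub>m f (nxt n i)) * maps A i = c \<cdot>\<^sub>m (f (nxt n i) * maps A i)"
    using mult_smult_assoc_mat[OF cc(4) mA] .
  also have "g (nxt n i) * maps A i - c \<cdot>\<^sub>m (f (nxt n i) * maps A i) = maps B i * g i - c \<cdot>\<^sub>m (maps B i * f i)"
    using hg hf by simp
  also have "c \<cdot>\<^sub>m (maps B i * f i) = maps B i * (c \<cdot>\<^sub>m f i)"
    using mult_smult_distrib[OF mB cc(2)] by simp
  also have "maps B i * g i - maps B i * (c \<cdot>\<^sub>m f i) = maps B i * (g i - c \<cdot>\<^sub>m f i)"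
    using mult_minus_distrib_mat[OF mB cc(1) smult_carrier_mat[OF cc(2)]] by simp
  finally show "(g (nxt n i) - c \<cdot>\<^sub>m f (nxt n i)) * maps A i = maps B i * (g i - c \<cdot>\<^sub>m f i)" .
qed

lemma lin_coord:
  assumes A: "(A :: 'a::field mat) \<in> carrier_mat r c" and B: "B \<in> carrier_mat r c" and v: "v \<in> carrier_vec c" and q: "q < r"
  shows "((A - k \<cdot>\<^sub>m B) *\<^sub>v v) $ q = (A *\<^sub>v v) $ q - k * (B *\<^sub>v v) $ q"
  using A B v q by (simp add: scalar_prod_def sum_subtractf sum_distrib_left algebra_simps)

lemma brick_U:
  assumes n: "0 < n" and t: "t < n" and m: "0 < m" and ml: "m \<le> l" and cond: "m \<le> n \<or> l + 1 - m \<le> n"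
  shows "brick_core n l (U n t m :: 'k::field qrep)"
proof -
  let ?U = "U n t m :: 'k qrep"
  let ?e = "unit_vec (Ud n t m t) 0 :: 'k vec"
  have ml1: "m \<le> l + 1" using ml by simp
  have UR: "is_rep n l ?U" using U_rep[OF n ml1] .
  define f where "f = (\<lambda>i. 1\<^sub>m (Ud n t m i) :: 'k mat)"
  have fh: "is_hom n f ?U ?U" unfolding f_def using is_hom_id[OF UR] by simp
  have t0: "0 < Ud n t m t" using Ud_t_pos[OF n m] .
  have nf: "\<not> factors_proj n l f ?U ?U"
  proof
    assume fp: "factors_proj n l f ?U ?U"
    have "(f t *\<^sub>v ?e) $ 0 = 0"
      using nonfactor[OF n t t m ml1 m ml1 fh fp t0] ml by (simp add: rr_self)
    then show False unfolding f_def using t0 by simp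
  qed
  have "\<forall>g. is_hom n g ?U ?U \<longrightarrow> (\<exists>c. factors_proj n l (\<lambda>i. g i - c \<cdot>\<^sub>m f i) ?U ?U)"
  proof (intro allI impI)
    fix g assume g: "is_hom n g ?U ?U"
    define c where "c = (g t *\<^sub>v ?e) $ 0"
    have hh: "is_hom n (\<lambda>i. g i - c \<cdot>\<^sub>m f i) ?U ?U" using is_hom_lin[OF UR UR g fh] .
    have gc: "g t \<in> carrier_mat (Ud n t m t) (Ud n t m t)" using is_homD1[OF g t] by simp
    have fc: "f t \<in> carrier_mat (Ud n t m t) (Ud n t m t)" unfolding f_def by simp
    have "factors_proj n l (\<lambda>i. g i - c \<cdot>\<^sub>m f i) ?U ?U"
    proof (rule factor[OF n t t m ml1 m ml1 hh], intro allI impI)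
      fix q assume q: "q < Ud n t m t" and nz: "((g t - c \<cdot>\<^sub>m f t) *\<^sub>v ?e) $ q \<noteq> 0"
      have val: "((g t - c \<cdot>\<^sub>m f t) *\<^sub>v ?e) $ q = (g t *\<^sub>v ?e) $ q - c * (f t *\<^sub>v ?e) $ q"
        using lin_coord[OF gc fc _ q] by simp
      have q0: "q \<noteq> 0"
      proof
        assume "q = 0"
        then have "((g t - c \<cdot>\<^sub>m f t) *\<^sub>v ?e) $ q = 0" using val t0 unfolding c_def f_def by simp
        then show False using nz by simp
      qed
      have qm: "n * q < m" using Ud_iff[OF n, of q t m t] q by (simp add: rr_self)
      have nq: "n \<le> n * q" using q0 by simp
      have "l + 1 \<le> n * q + m" using cond qm nq ml by linarith
      then show "l + 1 \<le> rr n t t + n * q + m" by (simp add: rr_self)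
    qed
    then show "\<exists>c. factors_proj n l (\<lambda>i. g i - c \<cdot>\<^sub>m f i) ?U ?U" by blast
  qed
  then show ?thesis unfolding brick_core_def using fh nf by blast
qed

lemma dvd_mod_diff:
  fixes d n a b :: int
  assumes "d dvd n" "d dvd (a - b)"
  shows "d dvd (a mod n - b mod n)"
proof -
  have "a mod n - b mod n = (a - b) - n * (a div n - b div n)"
    using div_mult_mod_eq[of a n] div_mult_mod_eq[of b n] by (simp add: algebra_simps)
  then show ?thesis using assms by simp
qed

definition sj :: "nat \<Rightarrow> nat \<Rightarrow> int \<Rightarrow> nat" where
  "sj n l j = nat ((j * int l) mod int n)"

lemma rr_ge_e:
  assumes n: "0 < n" and ne: "tau n t (sj n l j1) \<noteq> tau n t (sj n l j2)"
  shows "gcd n l \<le> rr n (tau n t (sj n l j2)) (tau n t (sj n l j1))"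
proof -
  let ?t1 = "tau n t (sj n l j1)" and ?t2 = "tau n t (sj n l j2)"
  let ?e = "int (gcd n l)"
  have i1: "int ?t1 = (int t - int (sj n l j1)) mod int n" unfolding tau_def using n by simp
  have i2: "int ?t2 = (int t - int (sj n l j2)) mod int n" unfolding tau_def using n by simp
  have s1: "int (sj n l j1) = (j1 * int l) mod int n" unfolding sj_def using n by simp
  have s2: "int (sj n l j2) = (j2 * int l) mod int n" unfolding sj_def using n by simp
  have en: "?e dvd int n" by (simp add: int_dvd_int_iff)
  have el: "?e dvd int l" by (simp add: int_dvd_int_iff)
  have d1: "?e dvd (j2 * int l - j1 * int l)" using el by (simp add: left_diff_distrib[symmetric])
  have d2: "?e dvd (int (sj n l j2) - int (sj n l j1))" unfolding s1 s2 using dvd_mod_diff[OF en d1] .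
  have d3: "?e dvd ((int t - int (sj n l j1)) - (int t - int (sj n l j2)))" using d2 by simp
  have d4: "?e dvd (int ?t1 - int ?t2)" unfolding i1 i2 using dvd_mod_diff[OF en d3] .
  have d5: "?e dvd ((int ?t1 - int ?t2) mod int n)" using d4 en by (simp add: dvd_mod_iff)
  have t1n: "?t1 < n" and t2n: "?t2 < n" using tau_lt[OF n] by auto
  have nz: "(int ?t1 - int ?t2) mod int n \<noteq> 0"
  proof
    assume z: "(int ?t1 - int ?t2) mod int n = 0"
    have "int ?t1 mod int n = int ?t2 mod int n" using z by (simp add: mod_eq_0_iff_dvd mod_eq_dvd_iff)
    then have "int ?t1 = int ?t2" using t1n t2n by simp
    then show False using ne by simp
  qed
  have pos: "0 \<le> (int ?t1 - int ?t2) mod int n" using n by simp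
  have "?e \<le> (int ?t1 - int ?t2) mod int n" using d5 nz pos by (simp add: zdvd_imp_le)
  then show ?thesis unfolding rr_def by linarith
qed

lemma nu_pow_sj: "nu_pow n l j M = shift_rep n (sj n l j) M"
  unfolding nu_pow_def sj_def by simp

lemma orbit_iso:
  assumes n: "0 < n" and R: "is_rep n l (M :: 'k::field qrep)" and iso: "iso n M (U n t m)" and ml: "m \<le> l + 1"
    and X: "X \<in> nu_orbit n l M"
  shows "is_rep n l X \<and> (\<exists>j. iso n X (U n (tau n t (sj n l j)) m) \<and> iso n X (shift_rep n (sj n l j) M))"
proof -
  have XR: "is_rep n l X" using X unfolding nu_orbit_def by simp
  obtain j where j: "iso n X (shift_rep n (sj n l j) M)" using X unfolding nu_orbit_def nu_pow_sj by blast
  let ?s = "sj n l j"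
  have UR: "is_rep n l (U n t m :: 'k qrep)" using U_rep[OF n ml] .
  have R1: "is_rep n l (shift_rep n ?s M)" using shift_is_rep[OF n R] .
  have R2: "is_rep n l (shift_rep n ?s (U n t m :: 'k qrep))" using shift_is_rep[OF n UR] .
  have R3: "is_rep n l (U n (tau n t ?s) m :: 'k qrep)" using U_rep[OF n ml] .
  have "iso n X (shift_rep n ?s (U n t m :: 'k qrep))"
    using iso_trans[OF XR R1 R2 j shift_iso[OF n iso]] .
  then have "iso n X (U n (tau n t ?s) m)"
    using iso_trans[OF XR R2 R3 _ U_shift_iso[OF n]] by blast
  then show ?thesis using XR j by blast
qed

lemma orbit_mem:
  assumes n: "0 < n" and R: "is_rep n l (M :: 'k::field qrep)" and iso: "iso n M (U n t m)" and ml: "m \<le> l + 1"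
  shows "(U n (tau n t (sj n l j)) m :: 'k qrep) \<in> nu_orbit n l M"
proof -
  let ?s = "sj n l j"
  have UR: "is_rep n l (U n t m :: 'k qrep)" using U_rep[OF n ml] .
  have R1: "is_rep n l (shift_rep n ?s M)" using shift_is_rep[OF n R] .
  have R2: "is_rep n l (shift_rep n ?s (U n t m :: 'k qrep))" using shift_is_rep[OF n UR] .
  have R3: "is_rep n l (U n (tau n t ?s) m :: 'k qrep)" using U_rep[OF n ml] .
  have "iso n (shift_rep n ?s M) (U n (tau n t ?s) m)"
    using iso_trans[OF R1 R2 R3 shift_iso[OF n iso] U_shift_iso[OF n]] .
  then have "iso n (U n (tau n t ?s) m :: 'k qrep) (nu_pow n l j M)"
    unfolding nu_pow_sj using iso_sym by blast
  then show ?thesis unfolding nu_orbit_def using R3 by blast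
qed

lemma tau_sj0: "t < n \<Longrightarrow> tau n t (sj n l 0) = t"
  unfolding tau_def sj_def by simp

theorem proposition2p10:
  fixes n l :: nat and M :: "'k::field qrep"
  assumes "alg_closed_field TYPE('k)"
    and "n \<ge> 1" and "l \<ge> 1"
    and "indecomposable n l M"
    and "\<not> projective n l M"
  shows "orthogonal_system n l (nu_orbit n l M) \<longleftrightarrow>
           (len n M \<le> gcd n l \<or> (l + 1 - gcd n l \<le> len n M \<and> len n M \<le> l))"
proof -
  have n: "0 < n" using assms(2) by simp
  have ind: "indecomposable n l M" using assms(4) .
  have R: "is_rep n l M" using ind unfolding indecomposable_def by simp
  obtain t m where tm: "t < n" "0 < m" "m \<le> l + 1" "iso n M (U n t m :: 'k qrep)"
    using structure_thm[OF n ind] by blast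
  have ml1: "m \<le> l + 1" using tm(3) .
  have UR: "is_rep n l (U n t m :: 'k qrep)" using U_rep[OF n ml1] .
  have lenM: "len n M = m" using iso_len[OF tm(4)] len_U[OF n] by simp
  have ml: "m \<le> l"
  proof (rule ccontr)
    assume "\<not> m \<le> l"
    then have "m = l + 1" using ml1 by simp
    then have "projective n l (U n t m :: 'k qrep)" using proj_U[OF n tm(1)] by simp
    then have "projective n l M" using projective_iso[OF R tm(4)] by simp
    then show False using assms(5) by simp
  qed
  define e where "e = gcd n l"
  have e1: "1 \<le> e" unfolding e_def using n by (simp add: Suc_le_eq)
  have en: "e \<le> n" unfolding e_def using n by (simp add: gcd_le1_nat)
  have el: "e \<le> l" unfolding e_def using assms(3) by (simp add: gcd_le2_nat)
  have RHS: "(len n M \<le> gcd n l \<or> (l + 1 - gcd n l \<le> len n M \<and> len n M \<le> l)) \<longleftrightarrow> (m \<le> e \<or> l + 1 - m \<le> e)"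
    unfolding lenM e_def[symmetric] using ml el by linarith
  show ?thesis unfolding RHS
  proof
    assume orth: "orthogonal_system n l (nu_orbit n l M)"
    show "m \<le> e \<or> l + 1 - m \<le> e"
    proof (rule ccontr)
      assume "\<not> (m \<le> e \<or> l + 1 - m \<le> e)"
      then have me: "e < m" and lme: "e < l + 1 - m" by auto
      have OB: "\<forall>X\<in>nu_orbit n l M. stable_brick n l X" and
           OH: "\<forall>X\<in>nu_orbit n l M. \<forall>Y\<in>nu_orbit n l M. \<not> iso n X Y \<longrightarrow> stable_hom_zero n l X Y"
        using orth unfolding orthogonal_system_def by auto
      have X0: "(U n t m :: 'k qrep) \<in> nu_orbit n l M"
        using orbit_mem[OF n R tm(4) ml1, of 0] tau_sj0[OF tm(1)] by simp
      let ?e0 = "unit_vec (Ud n t m t) 0 :: 'k vec"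
      show False
      proof (cases "e < n")
        case True
        obtain u v :: int where uv: "u * int n + v * int l = gcd (int n) (int l)" using bezout_int by blast
        have uv': "v * int l = int e - u * int n" using uv unfolding e_def by (simp add: algebra_simps)
        have sje: "sj n l v = e"
        proof -
          have "(v * int l) mod int n = (int e - u * int n) mod int n" using uv' by simp
          also have "\<dots> = int e mod int n" by (simp add: mod_diff_right_eq[symmetric])
          also have "\<dots> = int e" using True by simp
          finally show ?thesis unfolding sj_def by simp
        qed
        let ?t' = "tau n t e"
        have t'n: "?t' < n" using tau_lt[OF n] .
        have Y0: "(U n ?t' m :: 'k qrep) \<in> nu_orbit n l M"
          using orbit_mem[OF n R tm(4) ml1, of v] sje by simp
        have it': "int ?t' = (int t - int e) mod int n" unfolding tau_def using n by simp
        have ne: "t \<noteq> ?t'"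
        proof
          assume eq: "t = ?t'"
          then have "int t mod int n = (int t - int e) mod int n" using it' tm(1) by simp
          then have "int n dvd (int t - (int t - int e))" by (simp add: mod_eq_dvd_iff)
          then have "int n dvd int e" by simp
          then have "n dvd e" by simp
          then have "n \<le> e" using e1 by (simp add: dvd_imp_le)
          then show False using True by simp
        qed
        have rre: "rr n ?t' t = e"
        proof -
          have "(int t - int ?t') mod int n = (int t - (int t - int e)) mod int n"
            unfolding it' by (simp add: mod_diff_right_eq)
          also have "\<dots> = int e" using True by simp
          finally show ?thesis unfolding rr_def by simp
        qed
        have noniso: "\<not> iso n (U n t m :: 'k qrep) (U n ?t' m)" using U_noniso[OF n tm(1) t'n ne tm(2)] .
        have sz: "stable_hom_zero n l (U n t m :: 'k qrep) (U n ?t' m)" using OH X0 Y0 noniso by blast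
        have pos: "0 < Ud n ?t' m t" using Ud_iff[OF n, of 0 ?t' m t] rre me by simp
        let ?y = "unit_vec (Ud n ?t' m t) 0 :: 'k vec"
        have R': "is_rep n l (U n ?t' m :: 'k qrep)" using U_rep[OF n ml1] .
        have yc: "?y \<in> carrier_vec (dims (U n ?t' m :: 'k qrep) t)" by simp
        have pz: "pathmap n (U n ?t' m :: 'k qrep) t m *\<^sub>v ?y = 0\<^sub>v (dims (U n ?t' m :: 'k qrep) ((t + m) mod n))"
          using PU_unit[where 'k='k, OF n tm(1) pos, of m] by simp
        obtain h where h: "is_hom n h (U n t m :: 'k qrep) (U n ?t' m)" "h t *\<^sub>v ?e0 = ?y"
          using hom_from_U[OF n tm(1) tm(2) R' yc pz] by blast
        have fp: "factors_proj n l h (U n t m) (U n ?t' m)" using sz h(1) unfolding stable_hom_zero_def by blast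
        have short: "rr n ?t' t + n * 0 + m < l + 1" using rre lme by simp
        have "(h t *\<^sub>v ?e0) $ 0 = 0" using nonfactor[OF n tm(1) t'n tm(2) ml1 tm(2) ml1 h(1) fp pos short] .
        then show False using h(2) pos by simp
      next
        case False
        then have ne: "e = n" using en by simp
        have "stable_brick n l (U n t m :: 'k qrep)" using OB X0 by blast
        then obtain f where f: "is_hom n f (U n t m :: 'k qrep) (U n t m)"
          "\<forall>g. is_hom n g (U n t m :: 'k qrep) (U n t m) \<longrightarrow> (\<exists>c. factors_proj n l (\<lambda>i. g i - c \<cdot>\<^sub>m f i) (U n t m) (U n t m))"
          unfolding stable_brick_iff brick_core_def by blast
        have pos0: "0 < Ud n t m t" using Ud_t_pos[OF n tm(2)] .
        have pos1: "1 < Ud n t m t" using Ud_iff[OF n, of 1 t m t] me ne by (simp add: rr_self)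
        have fc: "f t \<in> carrier_mat (Ud n t m t) (Ud n t m t)" using is_homD1[OF f(1) tm(1)] by simp
        have key: "\<And>g c. is_hom n g (U n t m :: 'k qrep) (U n t m) \<Longrightarrow>
            factors_proj n l (\<lambda>i. g i - c \<cdot>\<^sub>m f i) (U n t m) (U n t m) \<Longrightarrow>
            (g t *\<^sub>v ?e0) $ 0 - c * (f t *\<^sub>v ?e0) $ 0 = 0 \<and> (g t *\<^sub>v ?e0) $ 1 - c * (f t *\<^sub>v ?e0) $ 1 = 0"
        proof -
          fix g c assume g: "is_hom n g (U n t m :: 'k qrep) (U n t m)"
            and fp: "factors_proj n l (\<lambda>i. g i - c \<cdot>\<^sub>m f i) (U n t m) (U n t m)"
          have hh: "is_hom n (\<lambda>i. g i - c \<cdot>\<^sub>m f i) (U n t m :: 'k qrep) (U n t m)" using is_hom_lin[OF UR UR g f(1)] .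
          have gc: "g t \<in> carrier_mat (Ud n t m t) (Ud n t m t)" using is_homD1[OF g tm(1)] by simp
          have s0: "rr n t t + n * 0 + m < l + 1" using ml by (simp add: rr_self)
          have s1: "rr n t t + n * 1 + m < l + 1" using lme ne ml by (simp add: rr_self)
          have "((g t - c \<cdot>\<^sub>m f t) *\<^sub>v ?e0) $ 0 = 0"
            using nonfactor[OF n tm(1) tm(1) tm(2) ml1 tm(2) ml1 hh fp pos0 s0] by simp
          moreover have "((g t - c \<cdot>\<^sub>m f t) *\<^sub>v ?e0) $ 1 = 0"
            using nonfactor[OF n tm(1) tm(1) tm(2) ml1 tm(2) ml1 hh fp pos1 s1] by simp
          ultimately show "(g t *\<^sub>v ?e0) $ 0 - c * (f t *\<^sub>v ?e0) $ 0 = 0 \<and> (g t *\<^sub>v ?e0) $ 1 - c * (f t *\<^sub>v ?e0) $ 1 = 0"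
            using lin_coord[OF gc fc _ pos0, of ?e0 c] lin_coord[OF gc fc _ pos1, of ?e0 c] by simp
        qed
        have g1: "is_hom n (\<lambda>i. 1\<^sub>m (Ud n t m i)) (U n t m :: 'k qrep) (U n t m)" using is_hom_id[OF UR] by simp
        let ?y1 = "unit_vec (Ud n t m t) 1 :: 'k vec"
        have pz: "pathmap n (U n t m :: 'k qrep) t m *\<^sub>v ?y1 = 0\<^sub>v (dims (U n t m :: 'k qrep) ((t + m) mod n))"
          using PU_unit[where 'k='k, OF n tm(1) pos1, of m] by simp
        obtain g2 where g2: "is_hom n g2 (U n t m :: 'k qrep) (U n t m)" "g2 t *\<^sub>v ?e0 = ?y1"
          using hom_from_U[OF n tm(1) tm(2) UR _ pz] by auto
        obtain c1 where c1: "factors_proj n l (\<lambda>i. 1\<^sub>m (Ud n t m i) - c1 \<cdot>\<^sub>m f i) (U n t m) (U n t m)"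
          using f(2) g1 by blast
        obtain c2 where c2: "factors_proj n l (\<lambda>i. g2 i - c2 \<cdot>\<^sub>m f i) (U n t m) (U n t m)"
          using f(2) g2(1) by blast
        have k1: "1 - c1 * (f t *\<^sub>v ?e0) $ 0 = 0" "0 - c1 * (f t *\<^sub>v ?e0) $ 1 = 0"
          using key[OF g1 c1] pos0 pos1 by auto
        have k2: "0 - c2 * (f t *\<^sub>v ?e0) $ 0 = 0" "1 - c2 * (f t *\<^sub>v ?e0) $ 1 = 0"
          using key[OF g2(1) c2] g2(2) pos0 pos1 by auto
        have "c1 \<noteq> 0" using k1(1) by auto
        then have "(f t *\<^sub>v ?e0) $ 1 = 0" using k1(2) by simp
        then show False using k2(2) by simp
      qed
    qed
  next
    assume C: "m \<le> e \<or> l + 1 - m \<le> e"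
    show "orthogonal_system n l (nu_orbit n l M)"
      unfolding orthogonal_system_def
    proof (intro conjI ballI impI)
      fix X assume X: "X \<in> nu_orbit n l M"
      obtain j where XR: "is_rep n l X" and j: "iso n X (U n (tau n t (sj n l j)) m)" "iso n X (shift_rep n (sj n l j) M)"
        using orbit_iso[OF n R tm(4) ml1 X] by blast
      have indX: "indecomposable n l X" using indecomposable_iso[OF XR j(2) shift_indec[OF n ind]] .
      have bU: "brick_core n l (U n (tau n t (sj n l j)) m :: 'k qrep)"
      proof -
        have cn: "m \<le> n \<or> l + 1 - m \<le> n" using C en by linarith
        show ?thesis using brick_U[OF n tau_lt[OF n] tm(2) ml cn] .
      qed
      have "brick_core n l X" using brick_core_iso[OF XR U_rep[OF n ml1] j(1) bU] .
      then show "stable_brick n l X" unfolding stable_brick_iff using indX by simp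
    next
      fix X Y assume X: "X \<in> nu_orbit n l M" and Y: "Y \<in> nu_orbit n l M" and ni: "\<not> iso n X Y"
      obtain j1 where XR: "is_rep n l X" and j1: "iso n X (U n (tau n t (sj n l j1)) m)"
        using orbit_iso[OF n R tm(4) ml1 X] by blast
      obtain j2 where YR: "is_rep n l Y" and j2: "iso n Y (U n (tau n t (sj n l j2)) m)"
        using orbit_iso[OF n R tm(4) ml1 Y] by blast
      let ?t1 = "tau n t (sj n l j1)" and ?t2 = "tau n t (sj n l j2)"
      have R1: "is_rep n l (U n ?t1 m :: 'k qrep)" and R2: "is_rep n l (U n ?t2 m :: 'k qrep)" using U_rep[OF n ml1] by auto
      have ne: "?t1 \<noteq> ?t2"
      proof
        assume eq: "?t1 = ?t2"
        have "iso n (U n ?t2 m :: 'k qrep) Y" using iso_sym[OF j2] .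
        then have "iso n X Y" using iso_trans[OF XR R1 YR j1] eq by simp
        then show False using ni by simp
      qed
      have ge: "e \<le> rr n ?t2 ?t1" unfolding e_def using rr_ge_e[OF n ne] .
      have "stable_hom_zero n l (U n ?t1 m :: 'k qrep) (U n ?t2 m)"
        unfolding stable_hom_zero_def
      proof (intro allI impI)
        fix h assume h: "is_hom n h (U n ?t1 m :: 'k qrep) (U n ?t2 m)"
        show "factors_proj n l h (U n ?t1 m) (U n ?t2 m)"
        proof (rule factor[OF n tau_lt[OF n] tau_lt[OF n] tm(2) ml1 tm(2) ml1 h], intro allI impI)
          fix q assume q: "q < Ud n ?t2 m ?t1"
          have "rr n ?t2 ?t1 + n * q < m" using Ud_iff[OF n] q by blast
          then show "l + 1 \<le> rr n ?t2 ?t1 + n * q + m" using C ge ml by linarith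
        qed
      qed
      then show "stable_hom_zero n l X Y" using stable_hom_zero_iso[OF XR YR R1 R2 j1 j2] by simp
    qed
  qed
qed

end
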